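(* Let $\mu$ be an $E_2$-invariant Borel probability measure on $\mathbb{T}$ whose support is contained in some $p$-flower $F$ for $E_2$. Then there is a $p$-flower $\tilde F$ for $E_2$ such that $\mathrm{supp}(\mu)\subset\tilde F$ and every atom of $\mu$ lies in the interior of $\tilde F$.
   Context: $\mathbb{T}=\mathbb{R}/\mathbb{Z}$, $E_2(x)=2x\bmod1$. A preimage selector for $E_2$ is a map $\eta:\mathbb{T}\to\mathbb{T}$ with $E_2(\eta(x))=x$ for all $x$, having finitely many discontinuities, each a jump discontinuity (both one-sided limits exist, differ, and one equals the value). A $p$-flower is $\overline{\eta(\mathbb{T})}$ for a preimage selector $\eta$ with exactly $p$ discontinuities; its $p$ connected components (closed intervals) are its petals. An atom of $\mu$ is a point $x$ with $\mu(\{x\})>0$. *)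

theory Defs
  imports "HOL-Probability.Probability"
begin

text \<open>The circle T = R/Z is modelled as the unit circle in the complex plane,
  via the homeomorphism t mod 1 \<mapsto> exp(2 pi i t). The doubling map E2 becomes z \<mapsto> z^2.\<close>

definition circleT :: "complex set" where
  "circleT = sphere 0 1"

definition circ :: "real \<Rightarrow> complex" where
  "circ t = cis (2 * pi * t)"

definition E2 :: "complex \<Rightarrow> complex" where
  "E2 z = z ^ 2"

definition discont :: "(complex \<Rightarrow> complex) \<Rightarrow> complex set" where
  "discont \<eta> = {z \<in> circleT. \<not> continuous (at z within circleT) \<eta>}"

definition jump_at :: "(complex \<Rightarrow> complex) \<Rightarrow> complex \<Rightarrow> bool" where
  "jump_at \<eta> z \<longleftrightarrow> (\<exists>x l r. circ x = z \<and>
      ((\<eta> \<circ> circ) \<longlongrightarrow> l) (at_left x) \<and> ((\<eta> \<circ> circ) \<longlongrightarrow> r) (at_right x) \<and>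
      l \<noteq> r \<and> (\<eta> z = l \<or> \<eta> z = r))"

definition preimage_selector :: "(complex \<Rightarrow> complex) \<Rightarrow> bool" where
  "preimage_selector \<eta> \<longleftrightarrow>
     (\<forall>z\<in>circleT. \<eta> z \<in> circleT \<and> E2 (\<eta> z) = z) \<and>
     finite (discont \<eta>) \<and> (\<forall>z\<in>discont \<eta>. jump_at \<eta> z)"

definition flower :: "nat \<Rightarrow> complex set \<Rightarrow> bool" where
  "flower p F \<longleftrightarrow> (\<exists>\<eta>. preimage_selector \<eta> \<and> card (discont \<eta>) = p \<and>
      F = closure (\<eta> ` circleT))"

definition E2_invariant :: "complex measure \<Rightarrow> bool" where
  "E2_invariant M \<longleftrightarrow>
     (\<forall>A\<in>sets M. emeasure M (E2 -` A \<inter> space M) = emeasure M A)"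

definition measure_support :: "complex measure \<Rightarrow> complex set" where
  "measure_support M = {x \<in> circleT. \<forall>U. openin (top_of_set circleT) U \<and> x \<in> U \<longrightarrow>
      emeasure M U > 0}"

definition atom :: "complex measure \<Rightarrow> complex \<Rightarrow> bool" where
  "atom M x \<longleftrightarrow> x \<in> space M \<and> emeasure M {x} > 0"

end

theory Submission
  imports Defs
begin

lemma inT_iff: "z \<in> circleT \<longleftrightarrow> norm z = 1"
  by (simp add: circleT_def)

lemma circ_in [simp]: "circ t \<in> circleT"
  by (simp add: circ_def circleT_def)

lemma circ_nz [simp]: "circ t \<noteq> 0"
  by (simp add: circ_def)

lemma circ_add: "circ (a + b) = circ a * circ b"
  by (simp add: circ_def cis_mult distrib_left)

lemma cis_sq: "cis a ^ 2 = cis (2 * a)"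
  using Complex.DeMoivre[of a 2] by simp

lemma circ_cis_sq: "circ t = cis (pi * t) ^ 2"
  by (simp add: circ_def cis_sq mult.assoc)

lemma E2_in: "z \<in> circleT \<Longrightarrow> E2 z \<in> circleT"
  by (simp add: E2_def circleT_def norm_power)

lemma closed_T: "closed circleT" by (simp add: circleT_def)

lemma sgn_T: "z \<in> circleT \<Longrightarrow> sgn z = z"
  by (simp add: circleT_def sgn_div_norm)

lemma T_nz: "z \<in> circleT \<Longrightarrow> z \<noteq> 0"
  by (auto simp: circleT_def)

lemma cont_circ: "continuous (at t) circ"
  unfolding circ_def cis_conv_exp by (intro continuous_intros)

lemma continuous_on_circ: "continuous_on A circ"
  unfolding circ_def cis_conv_exp by (intro continuous_intros)

lemma circ_Arg:
  assumes "z \<in> circleT"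
  shows "circ (t + Arg (z / circ t) / (2 * pi)) = z"
proof -
  have "z / circ t \<noteq> 0" using assms T_nz by auto
  have n: "norm (z / circ t) = 1" using assms by (simp add: circleT_def norm_divide circ_def)
  have "circ (t + Arg (z / circ t) / (2 * pi)) = circ t * cis (Arg (z / circ t))"
    by (simp add: circ_def cis_mult distrib_left)
  also have "\<dots> = circ t * sgn (z / circ t)" using \<open>z / circ t \<noteq> 0\<close> cis_Arg by simp
  also have "\<dots> = z" using n by (simp add: sgn_div_norm)
  finally show ?thesis .
qed

lemma transfer_cont:
  assumes "continuous (at t) (g \<circ> circ)"
  shows "continuous (at (circ t) within circleT) g"
proof -
  define c where "c = circ t"
  define h where "h z = t + Arg (z / c) / (2 * pi)" for z
  have "continuous (at c) (\<lambda>z. z / c)" by (intro continuous_intros) (simp add: c_def)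
  moreover have "continuous (at ((\<lambda>z. z / c) c)) Arg"
    using c_def circ_nz by (auto intro!: continuous_at_Arg simp: complex_nonpos_Reals_iff)
  ultimately have "continuous (at c) (\<lambda>z. Arg (z / c))"
    using continuous_at_compose[of c "\<lambda>z. z / c" Arg] by (simp add: o_def)
  hence "continuous (at c) h"
    unfolding h_def by (intro continuous_intros) auto
  hence hc: "continuous (at c within circleT) h"
    by (rule continuous_at_imp_continuous_at_within)
  have hct: "h c = t" using c_def by (simp add: h_def)
  have "continuous (at (h c) within h ` circleT) (g \<circ> circ)"
    using assms hct continuous_at_imp_continuous_at_within by metis
  hence "continuous (at c within circleT) ((g \<circ> circ) \<circ> h)"
    using continuous_within_compose[OF hc] by blast
  note cc = this
  have "\<And>z. z \<in> circleT \<Longrightarrow> ((g \<circ> circ) \<circ> h) z = g z"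
    using circ_Arg c_def h_def by simp
  note eqs = this
  have "continuous (at c within circleT) g"
    by (rule continuous_transform_within_openin[OF \<open>continuous (at c within circleT) ((g \<circ> circ) \<circ> h)\<close> _ _ eqs])
       (auto simp: c_def)
  thus ?thesis by (simp add: c_def)
qed

lemma cont_to_circ:
  assumes "continuous (at (circ t) within circleT) g"
  shows "continuous (at t) (g \<circ> circ)"
proof -
  have "continuous (at t within UNIV) circ" using cont_circ by simp
  moreover have "continuous (at (circ t) within range circ) g"
    by (rule continuous_within_subset[OF assms]) auto
  ultimately show ?thesis
    using continuous_within_compose[of t UNIV circ g] by simp
qed

lemma sel_sq:
  assumes "preimage_selector \<eta>" "z \<in> circleT"
  shows "\<eta> z ^ 2 = z" "\<eta> z \<in> circleT"
  using assms by (auto simp: preimage_selector_def E2_def)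

lemma closure_sub_T:
  assumes "preimage_selector \<eta>"
  shows "closure (\<eta> ` circleT) \<subseteq> circleT"
proof -
  have "\<eta> ` circleT \<subseteq> circleT" using assms by (auto simp: preimage_selector_def)
  thus ?thesis using closed_T closure_minimal by blast
qed

lemma CL:
  assumes sel: "preimage_selector \<eta>" and w: "w \<in> closure (\<eta> ` circleT)"
    and cont: "continuous (at (E2 w) within circleT) \<eta>"
  shows "\<eta> (E2 w) = w"
proof -
  obtain xs where xs: "\<And>n. xs n \<in> \<eta> ` circleT" "xs \<longlonglongrightarrow> w"
    using w closure_sequential by metis
  have "\<forall>n. \<exists>z. z \<in> circleT \<and> xs n = \<eta> z" using xs(1) by blast
  then obtain zs where zs: "\<And>n. zs n \<in> circleT" "\<And>n. xs n = \<eta> (zs n)"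
    by metis
  have "\<And>n. zs n = E2 (xs n)" using zs sel by (simp add: preimage_selector_def)
  hence "zs = (\<lambda>n. (xs n)^2)" by (auto simp: E2_def)
  hence "zs \<longlonglongrightarrow> E2 w"
    unfolding E2_def using xs(2) by (auto intro!: tendsto_intros)
  hence "(\<lambda>n. \<eta> (zs n)) \<longlonglongrightarrow> \<eta> (E2 w)"
    by (rule continuous_within_tendsto_compose'[OF cont zs(1)])
  moreover have "(\<lambda>n. \<eta> (zs n)) = xs" using zs by auto
  ultimately show ?thesis using xs(2) LIMSEQ_unique by auto
qed

lemma sqrt_cases:
  fixes a b :: complex
  assumes "a ^ 2 = b ^ 2" shows "a = b \<or> a = - b"
  using assms power2_eq_iff by blast

lemma interior_lemma:
  assumes sel: "preimage_selector \<eta>" and y: "y \<in> closure (\<eta> ` circleT)"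
    and cont: "continuous (at (E2 y) within circleT) \<eta>"
  shows "y \<in> (top_of_set circleT) interior_of closure (\<eta> ` circleT)"
proof -
  have yT: "y \<in> circleT" using y closure_sub_T[OF sel] by auto
  have ey: "\<eta> (E2 y) = y" using CL[OF sel y cont] .
  have "\<exists>d>0. \<forall>x'\<in>circleT. dist x' (E2 y) < d \<longrightarrow> dist (\<eta> x') (\<eta> (E2 y)) < 1"
    using cont[unfolded continuous_within_eps_delta, rule_format, of 1] by simp
  then obtain d where d: "d > 0" "\<And>x'. x' \<in> circleT \<Longrightarrow> dist x' (E2 y) < d \<Longrightarrow> dist (\<eta> x') (\<eta> (E2 y)) < 1"
    by blast
  define e where "e = min (1/2) (d/2)"
  have e: "e > 0" using d by (simp add: e_def)
  define U where "U = circleT \<inter> ball y e"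
  have "openin (top_of_set circleT) U" unfolding U_def by (auto intro!: openin_open_Int)
  moreover have "U \<subseteq> closure (\<eta> ` circleT)"
  proof
    fix w assume "w \<in> U"
    hence wT: "w \<in> circleT" and wy: "norm (w - y) < e" by (auto simp: U_def dist_norm norm_minus_commute)
    have "E2 w - E2 y = (w - y) * (w + y)" by (simp add: E2_def power2_eq_square algebra_simps)
    hence "norm (E2 w - E2 y) = norm (w - y) * norm (w + y)" by (simp add: norm_mult)
    also have "\<dots> \<le> norm (w - y) * 2"
    proof (rule mult_left_mono)
      show "norm (w + y) \<le> 2" using norm_triangle_ineq[of w y] wT yT by (simp add: inT_iff)
    qed simp
    also have "\<dots> < d" using wy e_def by simp
    finally have "dist (\<eta> (E2 w)) y < 1" using d(2)[OF E2_in[OF wT]] ey by (simp add: dist_norm)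
    note dd = this
    have "\<eta> (E2 w) ^ 2 = w ^ 2" using sel_sq[OF sel E2_in[OF wT]] by (simp add: E2_def)
    hence disj: "\<eta> (E2 w) = w \<or> \<eta> (E2 w) = - w" by (rule sqrt_cases)
    have "norm (- w - y) \<ge> 3/2"
    proof -
      have n2: "norm (2 * y) = 2" using yT by (simp add: inT_iff norm_mult)
      have "norm ((w + y) - (w - y)) \<le> norm (w + y) + norm (w - y)" by (rule norm_triangle_ineq4)
      hence "norm (2 * y) \<le> norm (w + y) + norm (w - y)" by simp
      moreover have "w + y = - (- w - y)" by simp
      hence "norm (w + y) = norm (- w - y)" by (simp only: norm_minus_cancel)
      ultimately show ?thesis using wy e_def n2 by linarith
    qed
    note nn = this
    have ne: "\<eta> (E2 w) \<noteq> - w"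
    proof
      assume h: "\<eta> (E2 w) = - w"
      from dd have "dist (- w) y < 1" by (simp only: h)
      hence "norm (- w - y) < 1" by (simp only: dist_norm)
      with nn show False by linarith
    qed
    have "\<eta> (E2 w) = w"
      using disj
    proof
      assume "\<eta> (E2 w) = - w" with ne show ?thesis by contradiction
    qed
    have "w \<in> \<eta> ` circleT" by (rule image_eqI[where f=\<eta>, OF sym[OF \<open>\<eta> (E2 w) = w\<close>] E2_in[OF wT]])
    thus "w \<in> closure (\<eta> ` circleT)" by (rule subsetD[OF closure_subset])
  qed
  moreover have "y \<in> U" using yT e by (simp add: U_def)
  ultimately show ?thesis using interior_of_maximal by blast
qed

lemma ev_nhds_at: "eventually P (nhds x) \<Longrightarrow> eventually P (at x within s)"
  unfolding eventually_at_filter by (auto elim: eventually_mono)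

lemma circ_sub: "circ (a - b) = circ a / circ b"
  by (simp add: circ_def cis_divide right_diff_distrib)

lemma circ_eq_imp_int:
  assumes "circ a = circ b" shows "\<exists>n::int. a - b = n"
proof -
  have "circ (a - b) = 1" using assms by (simp add: circ_sub)
  hence "cos (2 * pi * (a - b)) = 1" by (simp add: circ_def cis.ctr complex_eq_iff)
  then obtain n :: int where "2 * pi * (a - b) = of_int n * 2 * pi" using cos_one_2pi_int by blast
  hence "a - b = n" by simp
  thus ?thesis by blast
qed

lemma circ_inj:
  assumes "circ a = circ b" "\<bar>a - b\<bar> < 1" shows "a = b"
proof -
  obtain n :: int where n: "a - b = n" using circ_eq_imp_int[OF assms(1)] by blast
  hence "\<bar>real_of_int n\<bar> < 1" using assms(2) by simp
  hence "n = 0" by linarith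
  thus ?thesis using n by simp
qed

lemma lim_sq:
  assumes sel: "preimage_selector \<eta>"
    and lim: "((\<eta> \<circ> circ) \<longlongrightarrow> c) F" and nt: "F \<noteq> bot" and le: "F \<le> at x"
  shows "c ^ 2 = circ x"
proof -
  have "((\<lambda>t. (\<eta> (circ t)) ^ 2) \<longlongrightarrow> c ^ 2) F"
    using lim by (auto intro!: tendsto_intros simp: o_def)
  moreover have "\<And>t. (\<eta> (circ t)) ^ 2 = circ t" using sel_sq[OF sel circ_in] by simp
  ultimately have "(circ \<longlongrightarrow> c ^ 2) F" by simp
  moreover have "(circ \<longlongrightarrow> circ x) F"
    using cont_circ[of x] le unfolding isCont_def by (rule tendsto_mono[rotated])
  ultimately show ?thesis using nt tendsto_unique by blast
qed

lemma norm_of_sq: "(c::complex) ^ 2 = circ x \<Longrightarrow> norm c = 1"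
proof -
  assume "c ^ 2 = circ x"
  hence "norm (c ^ 2) = 1" using circ_in[of x] by (simp only: inT_iff)
  hence "norm c ^ 2 = 1" by (simp add: norm_power)
  hence "norm c = 1 \<or> norm c = -1" by (simp add: power2_eq_1_iff)
  thus "norm c = 1" using norm_ge_zero[of c] by linarith
qed

lemma local_form:
  assumes sel: "preimage_selector \<eta>"
    and lim: "((\<eta> \<circ> circ) \<longlongrightarrow> c) F" and csq: "c ^ 2 = circ x" and le: "F \<le> at x"
  shows "eventually (\<lambda>t. \<eta> (circ t) = c * cis (pi * (t - x))) F"
proof -
  define q where "q t = \<eta> (circ t) / cis (pi * (t - x))" for t
  have nc: "norm c = 1" using norm_of_sq[OF csq] .
  have "isCont (\<lambda>t. cis (pi * (t - x))) x"
    unfolding cis_conv_exp by (intro continuous_intros)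
  hence "((\<lambda>t. cis (pi * (t - x))) \<longlongrightarrow> cis (pi * (x - x))) (at x)"
    unfolding isCont_def .
  hence "((\<lambda>t. cis (pi * (t - x))) \<longlongrightarrow> 1) F"
    by (intro tendsto_mono[OF le]) simp
  hence "(q \<longlongrightarrow> c / 1) F" unfolding q_def using lim
    by (intro tendsto_intros) (auto simp: o_def)
  hence "eventually (\<lambda>t. dist (q t) c < 1) F" by (intro tendstoD) auto
  thus ?thesis
  proof (rule eventually_mono)
    fix t assume d: "dist (q t) c < 1"
    have cz: "cis (pi * (t - x)) \<noteq> 0" by simp
    have "cis (pi * (t - x)) ^ 2 = circ (t - x)" using circ_cis_sq by simp
    hence "q t ^ 2 = circ t / circ (t - x)"
      unfolding q_def using sel_sq[OF sel circ_in] by (simp add: power_divide)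
    also have "\<dots> = c ^ 2" using csq by (simp add: circ_sub)
    finally have "q t = c \<or> q t = - c" by (rule sqrt_cases)
    moreover have "q t \<noteq> - c"
    proof
      assume "q t = - c"
      hence "dist (q t) c = norm (2 * c)" by (simp add: dist_norm)
      also have "\<dots> = 2" using nc by (simp add: norm_mult)
      finally show False using d by simp
    qed
    ultimately have "q t = c" by (cases "q t = c") simp_all
    thus "\<eta> (circ t) = c * cis (pi * (t - x))" unfolding q_def using cz
      by (simp add: divide_eq_eq)
  qed
qed

lemma ev_right:
  assumes "eventually P (at_right (x::real))" shows "\<exists>\<delta>>0. \<forall>u. 0 < u \<and> u < \<delta> \<longrightarrow> P (x + u)"
proof -
  obtain b where b: "b > x" "\<And>y. y > x \<Longrightarrow> y < b \<Longrightarrow> P y"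
    using assms unfolding eventually_at_right_field by blast
  show ?thesis
  proof (intro exI[of _ "b - x"] conjI allI impI)
    fix u assume "0 < u \<and> u < b - x" thus "P (x + u)" using b(2)[of "x + u"] by simp
  qed (use b in simp)
qed

lemma ev_left:
  assumes "eventually P (at_left (x::real))" shows "\<exists>\<delta>>0. \<forall>u. 0 < u \<and> u < \<delta> \<longrightarrow> P (x - u)"
proof -
  obtain b where b: "b < x" "\<And>y. y > b \<Longrightarrow> y < x \<Longrightarrow> P y"
    using assms unfolding eventually_at_left_field by blast
  show ?thesis
  proof (intro exI[of _ "x - b"] conjI allI impI)
    fix u assume "0 < u \<and> u < x - b" thus "P (x - u)" using b(2)[of "x - u"] by simp
  qed (use b in simp)
qed

lemma at_left_le: "at_left (x::real) \<le> at x" by (simp add: at_le)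
lemma at_right_le: "at_right (x::real) \<le> at x" by (simp add: at_le)

lemma sigma_sq: "(\<sigma>::real) = 1 \<or> \<sigma> = -1 \<Longrightarrow> \<sigma> * \<sigma> = 1" by auto

locale surg =
  fixes \<eta> :: "complex \<Rightarrow> complex" and d :: complex and x \<sigma> :: real and a b :: complex
    and \<delta> s :: real
  assumes sel: "preimage_selector \<eta>"
    and dD: "d \<in> discont \<eta>"
    and cx: "circ x = d"
    and sig: "\<sigma> = 1 \<or> \<sigma> = -1"
    and asq: "a ^ 2 = circ x"
    and bma: "b = - a"
    and dpos: "0 < \<delta>" and dle: "\<delta> \<le> 1/2"
    and locp: "\<And>u. 0 < u \<Longrightarrow> u < \<delta> \<Longrightarrow> \<eta> (circ (x + \<sigma> * u)) = b * cis (pi * (\<sigma> * u))"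
    and locm: "\<And>u. 0 < u \<Longrightarrow> u < \<delta> \<Longrightarrow> \<eta> (circ (x - \<sigma> * u)) = a * cis (- (pi * (\<sigma> * u)))"
    and etad: "\<eta> d = a \<or> \<eta> d = b"
    and spos: "0 < s" and sle: "s < \<delta>"
begin

lemma ss: "\<sigma> * \<sigma> = 1" using sig by auto
lemma ss2 [simp]: "\<sigma> * (\<sigma> * y) = y" using ss by (simp add: mult.assoc[symmetric])
lemma sabs: "\<bar>\<sigma>\<bar> = 1" using sig by auto

lemma na: "norm a = 1" using norm_of_sq[OF asq] .
lemma ab: "a \<noteq> b" using na bma by auto

lemma loc:
  assumes "\<bar>t - x\<bar> < \<delta>"
  shows "\<sigma> * (t - x) > 0 \<Longrightarrow> \<eta> (circ t) = b * cis (pi * (t - x))"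
    and "\<sigma> * (t - x) < 0 \<Longrightarrow> \<eta> (circ t) = a * cis (pi * (t - x))"
proof -
  have tt: "t = x + \<sigma> * (\<sigma> * (t - x))" by simp
  have ab2: "\<bar>\<sigma> * (t - x)\<bar> = \<bar>t - x\<bar>" using sabs by (simp add: abs_mult)
  {
    assume pos: "\<sigma> * (t - x) > 0"
    have "\<eta> (circ t) = \<eta> (circ (x + \<sigma> * (\<sigma> * (t - x))))" using tt by simp
    also have "\<dots> = b * cis (pi * (\<sigma> * (\<sigma> * (t - x))))"
      using pos assms ab2 by (intro locp) auto
    also have "\<sigma> * (\<sigma> * (t - x)) = t - x" by simp
    finally show "\<eta> (circ t) = b * cis (pi * (t - x))" .
  next
    assume neg: "\<sigma> * (t - x) < 0"
    have tt2: "t = x - \<sigma> * (- (\<sigma> * (t - x)))" by simp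
    have "\<eta> (circ t) = \<eta> (circ (x - \<sigma> * (- (\<sigma> * (t - x)))))" using tt2 by simp
    also have "\<dots> = a * cis (- (pi * (\<sigma> * (- (\<sigma> * (t - x))))))"
      using neg assms ab2 by (intro locm) auto
    also have "- (pi * (\<sigma> * (- (\<sigma> * (t - x))))) = pi * (t - x)" by (simp add: algebra_simps)
    finally show "\<eta> (circ t) = a * cis (pi * (t - x))" .
  }
qed

lemma circ_win_eq:
  assumes "circ t = circ t'" "\<bar>t - x\<bar> < \<delta>" "\<bar>t' - x\<bar> < \<delta>"
  shows "t = t'"
  using circ_inj[OF assms(1)] assms dle by linarith

definition "C = {circ t | t. \<bar>t - x\<bar> < \<delta> \<and> 0 < \<sigma> * (t - x) \<and> \<sigma> * (t - x) < s}"
definition "K = (\<lambda>u. circ (x + \<sigma> * u)) ` {0..s}"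
definition "d' = circ (x + \<sigma> * s)"
definition "\<eta>' z = (if z \<in> C then - \<eta> z else if z = d then a else \<eta> z)"

lemma win_u: "\<bar>(x + \<sigma> * u) - x\<bar> = \<bar>u\<bar>" using sabs by (simp add: abs_mult)
lemma sig_u: "\<sigma> * ((x + \<sigma> * u) - x) = u" by simp

lemma C_iff:
  assumes "\<bar>t - x\<bar> < \<delta>"
  shows "circ t \<in> C \<longleftrightarrow> 0 < \<sigma> * (t - x) \<and> \<sigma> * (t - x) < s"
proof
  assume "circ t \<in> C"
  then obtain t' where t': "circ t = circ t'" "\<bar>t' - x\<bar> < \<delta>" "0 < \<sigma> * (t' - x)" "\<sigma> * (t' - x) < s"
    unfolding C_def by blast
  have "t = t'" using circ_win_eq[OF t'(1) assms t'(2)] .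
  thus "0 < \<sigma> * (t - x) \<and> \<sigma> * (t - x) < s" using t' by simp
qed (use assms in \<open>auto simp: C_def\<close>)

lemma K_iff:
  assumes "\<bar>t - x\<bar> < \<delta>"
  shows "circ t \<in> K \<longleftrightarrow> 0 \<le> \<sigma> * (t - x) \<and> \<sigma> * (t - x) \<le> s"
proof
  assume "circ t \<in> K"
  then obtain u where u: "circ t = circ (x + \<sigma> * u)" "0 \<le> u" "u \<le> s"
    unfolding K_def by auto
  have "\<bar>(x + \<sigma> * u) - x\<bar> < \<delta>" using win_u u sle by simp
  hence "t = x + \<sigma> * u" using circ_win_eq[OF u(1) assms] by simp
  thus "0 \<le> \<sigma> * (t - x) \<and> \<sigma> * (t - x) \<le> s" using u sig_u by simp
next
  assume h: "0 \<le> \<sigma> * (t - x) \<and> \<sigma> * (t - x) \<le> s"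
  have "t = x + \<sigma> * (\<sigma> * (t - x))" by simp
  thus "circ t \<in> K" unfolding K_def using h by (intro image_eqI[of _ _ "\<sigma> * (t - x)"]) auto
qed

lemma d_iff:
  assumes "\<bar>t - x\<bar> < \<delta>"
  shows "circ t = d \<longleftrightarrow> t = x"
  using circ_win_eq[of t x] assms dpos cx by auto

lemma C_sub_K: "C \<subseteq> K"
proof
  fix z assume "z \<in> C"
  then obtain t where t: "z = circ t" "\<bar>t - x\<bar> < \<delta>" "0 < \<sigma> * (t - x)" "\<sigma> * (t - x) < s"
    unfolding C_def by blast
  thus "z \<in> K" using K_iff[OF t(2)] by simp
qed

lemma d_in_K: "d \<in> K"
  using K_iff[of x] dpos cx spos by simp

lemma d'_in_K: "d' \<in> K"
  unfolding d'_def K_def using spos by auto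

lemma compact_K: "compact K"
  unfolding K_def
  by (intro compact_continuous_image continuous_on_compose2[OF continuous_on_circ])
     (auto intro!: continuous_intros)

lemma closed_K: "closed K" using compact_K compact_imp_closed by blast

lemma K_sub_T: "K \<subseteq> circleT" unfolding K_def by auto

lemma eta'_off: "z \<notin> K \<Longrightarrow> \<eta>' z = \<eta> z"
  using C_sub_K d_in_K unfolding \<eta>'_def by auto

lemma eta'_form:
  assumes "\<bar>t - x\<bar> < \<delta>"
  shows "\<eta>' (circ t) = (if \<sigma> * (t - x) < s then a else b) * cis (pi * (t - x))"
proof (cases "\<sigma> * (t - x) < 0")
  case True
  hence "circ t \<notin> C" "circ t \<noteq> d" using C_iff[OF assms] d_iff[OF assms] by auto
  thus ?thesis using loc(2)[OF assms True] True spos unfolding \<eta>'_def by auto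
next
  case False
  show ?thesis
  proof (cases "t = x")
    case True
    hence "circ t \<notin> C" using C_iff[OF assms] by auto
    thus ?thesis using True cx spos unfolding \<eta>'_def by auto
  next
    case tx: False
    hence pos: "\<sigma> * (t - x) > 0" using False sig by auto
    have nd: "circ t \<noteq> d" using d_iff[OF assms] tx by auto
    show ?thesis
    proof (cases "\<sigma> * (t - x) < s")
      case True
      hence "circ t \<in> C" using C_iff[OF assms] pos by auto
      thus ?thesis using loc(1)[OF assms pos] True bma unfolding \<eta>'_def by auto
    next
      case F2: False
      hence "circ t \<notin> C" using C_iff[OF assms] by auto
      thus ?thesis using loc(1)[OF assms pos] F2 nd unfolding \<eta>'_def by auto
    qed
  qed
qed

end

lemma cont_from_formula:
  fixes f :: "complex \<Rightarrow> complex"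
  assumes "open U0" "t0 \<in> U0" "\<And>t. t \<in> U0 \<Longrightarrow> f (circ t) = c * cis (pi * (t - x))"
  shows "continuous (at (circ t0) within circleT) f"
proof -
  have ev: "eventually (\<lambda>t. (f \<circ> circ) t = c * cis (pi * (t - x))) (nhds t0)"
    using eventually_nhds_in_open[OF assms(1,2)] by (rule eventually_mono) (use assms(3) in simp)
  have "isCont (\<lambda>t. c * cis (pi * (t - x))) t0"
    unfolding cis_conv_exp by (intro continuous_intros)
  hence "isCont (f \<circ> circ) t0" using isCont_cong[OF ev] by (simp add: comp_def)
  thus ?thesis by (rule transfer_cont)
qed

lemma isCont_cisf: fixes c :: complex and x tt :: real shows "isCont (\<lambda>t. c * cis (pi * (t - x))) tt"
  unfolding cis_conv_exp by (intro continuous_intros)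

context surg begin

lemma open_band: "open {t::real. \<bar>t - x\<bar> < \<delta> \<and> c < \<sigma> * (t - x) \<and> \<sigma> * (t - x) < e}"
proof -
  have "{t::real. \<bar>t - x\<bar> < \<delta> \<and> c < \<sigma> * (t - x) \<and> \<sigma> * (t - x) < e}
      = {t. \<bar>t - x\<bar> < \<delta>} \<inter> {t. c < \<sigma> * (t - x)} \<inter> {t. \<sigma> * (t - x) < e}" by auto
  moreover have "open {t::real. \<bar>t - x\<bar> < \<delta>}"
    by (rule open_Collect_less) (auto intro!: continuous_intros)
  moreover have "open {t::real. c < \<sigma> * (t - x)}"
    by (rule open_Collect_less) (auto intro!: continuous_intros)
  moreover have "open {t::real. \<sigma> * (t - x) < e}"
    by (rule open_Collect_less) (auto intro!: continuous_intros)
  ultimately show ?thesis by (metis open_Int)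
qed

lemma sabs_t: "\<bar>\<sigma> * (t - x)\<bar> = \<bar>t - x\<bar>" using sabs by (simp add: abs_mult)

lemma cont_eta'_lt:
  assumes "\<bar>t0 - x\<bar> < \<delta>" "\<sigma> * (t0 - x) < s"
  shows "continuous (at (circ t0) within circleT) \<eta>'"
proof (rule cont_from_formula[OF open_band[of "-1" s]])
  show "t0 \<in> {t. \<bar>t - x\<bar> < \<delta> \<and> - 1 < \<sigma> * (t - x) \<and> \<sigma> * (t - x) < s}"
    using assms sabs_t[of t0] dle by auto
next
  fix t assume "t \<in> {t. \<bar>t - x\<bar> < \<delta> \<and> - 1 < \<sigma> * (t - x) \<and> \<sigma> * (t - x) < s}"
  thus "\<eta>' (circ t) = a * cis (pi * (t - x))" using eta'_form by auto
qed

lemma cont_eta_pos: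
  assumes "\<bar>t0 - x\<bar> < \<delta>" "0 < \<sigma> * (t0 - x)"
  shows "continuous (at (circ t0) within circleT) \<eta>"
proof (rule cont_from_formula[OF open_band[of 0 1]])
  show "t0 \<in> {t. \<bar>t - x\<bar> < \<delta> \<and> 0 < \<sigma> * (t - x) \<and> \<sigma> * (t - x) < 1}"
    using assms sabs_t[of t0] dle by auto
next
  fix t assume "t \<in> {t. \<bar>t - x\<bar> < \<delta> \<and> 0 < \<sigma> * (t - x) \<and> \<sigma> * (t - x) < 1}"
  thus "\<eta> (circ t) = b * cis (pi * (t - x))" using loc(1) by auto
qed

lemma K_param: "z \<in> K \<Longrightarrow> \<exists>u. z = circ (x + \<sigma> * u) \<and> 0 \<le> u \<and> u \<le> s"
  unfolding K_def by auto

lemma K_not_discont: "z \<in> K \<Longrightarrow> z \<noteq> d \<Longrightarrow> z \<notin> discont \<eta>"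
proof -
  assume "z \<in> K" "z \<noteq> d"
  then obtain u where u: "z = circ (x + \<sigma> * u)" "0 \<le> u" "u \<le> s" using K_param by blast
  have "u \<noteq> 0" using u \<open>z \<noteq> d\<close> cx by auto
  hence "continuous (at z within circleT) \<eta>"
    using u sle by (intro cont_eta_pos[of "x + \<sigma> * u", folded u(1)]) (auto simp: win_u abs_mult sabs)
  thus ?thesis by (simp add: discont_def)
qed

lemma K_cont': "z \<in> K \<Longrightarrow> z \<noteq> d' \<Longrightarrow> continuous (at z within circleT) \<eta>'"
proof -
  assume "z \<in> K" "z \<noteq> d'"
  then obtain u where u: "z = circ (x + \<sigma> * u)" "0 \<le> u" "u \<le> s" using K_param by blast
  have "u \<noteq> s" using u \<open>z \<noteq> d'\<close> d'_def by auto
  thus "continuous (at z within circleT) \<eta>'"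
    using u sle by (intro cont_eta'_lt[of "x + \<sigma> * u", folded u(1)]) (auto simp: win_u abs_mult sabs)
qed

lemma d'_ne_d: "d' \<noteq> d"
proof -
  have "\<bar>(x + \<sigma> * s) - x\<bar> < \<delta>" using spos sle by (simp add: abs_mult sabs)
  hence "circ (x + \<sigma> * s) = d \<longleftrightarrow> x + \<sigma> * s = x" by (rule d_iff)
  moreover have "\<sigma> * s \<noteq> 0" using spos sig by auto
  ultimately show ?thesis unfolding d'_def by auto
qed

lemma d'_not_discont: "d' \<notin> discont \<eta>"
  by (rule K_not_discont[OF d'_in_K d'_ne_d])

lemma openin_off: "openin (top_of_set circleT) (circleT - K)"
proof -
  have "circleT - K = circleT \<inter> (- K)" by auto
  thus ?thesis using closed_K by (metis open_Compl openin_open_Int)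
qed

lemma off_K_iff:
  assumes "z \<in> circleT" "z \<notin> K"
  shows "continuous (at z within circleT) \<eta>' \<longleftrightarrow> continuous (at z within circleT) \<eta>"
proof
  assume "continuous (at z within circleT) \<eta>'"
  thus "continuous (at z within circleT) \<eta>"
    by (rule continuous_transform_within_openin[OF _ openin_off]) (use assms eta'_off in auto)
next
  assume "continuous (at z within circleT) \<eta>"
  thus "continuous (at z within circleT) \<eta>'"
    by (rule continuous_transform_within_openin[OF _ openin_off]) (use assms eta'_off in auto)
qed

definition "t0 = x + \<sigma> * s"
definition "\<rho> = min s (\<delta> - s)"
lemma rho_pos: "\<rho> > 0" using spos sle by (simp add: \<rho>_def)

lemma near_t0:
  assumes "\<bar>t - t0\<bar> < \<rho>"
  shows "\<bar>t - x\<bar> < \<delta>" "\<sigma> * (t - x) < s \<longleftrightarrow> \<sigma> * (t - t0) < 0" "0 < \<sigma> * (t - x)"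
proof -
  have e: "\<sigma> * (t - x) = s + \<sigma> * (t - t0)" unfolding t0_def by (simp add: algebra_simps)
  have "\<bar>\<sigma> * (t - t0)\<bar> < \<rho>" using assms sabs by (simp add: abs_mult)
  hence h: "\<bar>\<sigma> * (t - t0)\<bar> < s" "\<bar>\<sigma> * (t - t0)\<bar> < \<delta> - s" unfolding \<rho>_def by auto
  have "\<bar>\<sigma> * (t - x)\<bar> < \<delta>" using e h by linarith
  thus "\<bar>t - x\<bar> < \<delta>" using sabs_t by simp
  show "\<sigma> * (t - x) < s \<longleftrightarrow> \<sigma> * (t - t0) < 0" using e by linarith
  show "0 < \<sigma> * (t - x)" using e h by linarith
qed

lemma eta'_d': "\<eta>' d' = b * cis (pi * (t0 - x))"
proof -
  have "\<bar>t0 - x\<bar> < \<delta>" using near_t0(1)[of t0] rho_pos by simp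
  moreover have "\<not> \<sigma> * (t0 - x) < s" unfolding t0_def by simp
  ultimately show ?thesis using eta'_form[of t0] unfolding d'_def t0_def by simp
qed

lemma lim_P_side:
  "((\<eta>' \<circ> circ) \<longlongrightarrow> a * cis (pi * (t0 - x))) (if \<sigma> = 1 then at_left t0 else at_right t0)"
proof -
  have ev: "eventually (\<lambda>t. (\<eta>' \<circ> circ) t = a * cis (pi * (t - x))) (if \<sigma> = 1 then at_left t0 else at_right t0)"
  proof (cases "\<sigma> = 1")
    case True
    have "eventually (\<lambda>t. t \<in> {t0 - \<rho><..<t0}) (at_left t0)"
      using rho_pos by (intro eventually_at_left_real) simp
    hence "eventually (\<lambda>t. (\<eta>' \<circ> circ) t = a * cis (pi * (t - x))) (at_left t0)"
    proof (rule eventually_mono)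
      fix t assume "t \<in> {t0 - \<rho><..<t0}"
      hence h: "\<bar>t - t0\<bar> < \<rho>" "\<sigma> * (t - t0) < 0" using True by auto
      show "(\<eta>' \<circ> circ) t = a * cis (pi * (t - x))" using eta'_form[OF near_t0(1)[OF h(1)]] near_t0(2)[OF h(1)] h(2) by simp
    qed
    thus ?thesis using True by simp
  next
    case False
    hence sm: "\<sigma> = -1" using sig by simp
    have "eventually (\<lambda>t. t \<in> {t0<..<t0 + \<rho>}) (at_right t0)"
      using rho_pos by (intro eventually_at_right_real) simp
    hence "eventually (\<lambda>t. (\<eta>' \<circ> circ) t = a * cis (pi * (t - x))) (at_right t0)"
    proof (rule eventually_mono)
      fix t assume "t \<in> {t0<..<t0 + \<rho>}"
      hence h: "\<bar>t - t0\<bar> < \<rho>" "\<sigma> * (t - t0) < 0" using sm by auto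
      show "(\<eta>' \<circ> circ) t = a * cis (pi * (t - x))" using eta'_form[OF near_t0(1)[OF h(1)]] near_t0(2)[OF h(1)] h(2) by simp
    qed
    thus ?thesis using False by simp
  qed
  have "((\<lambda>t. a * cis (pi * (t - x))) \<longlongrightarrow> a * cis (pi * (t0 - x))) (if \<sigma> = 1 then at_left t0 else at_right t0)"
    using isCont_cisf[where c=a and x=x and tt=t0] unfolding isCont_def
    by (rule tendsto_mono[rotated]) (simp add: at_left_le at_right_le)
  thus ?thesis by (rule iffD2[OF tendsto_cong[OF ev]])
qed

lemma lim_Q_side:
  "((\<eta>' \<circ> circ) \<longlongrightarrow> b * cis (pi * (t0 - x))) (if \<sigma> = 1 then at_right t0 else at_left t0)"
proof -
  have ev: "eventually (\<lambda>t. (\<eta>' \<circ> circ) t = b * cis (pi * (t - x))) (if \<sigma> = 1 then at_right t0 else at_left t0)"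
  proof (cases "\<sigma> = 1")
    case True
    have "eventually (\<lambda>t. t \<in> {t0<..<t0 + \<rho>}) (at_right t0)"
      using rho_pos by (intro eventually_at_right_real) simp
    hence "eventually (\<lambda>t. (\<eta>' \<circ> circ) t = b * cis (pi * (t - x))) (at_right t0)"
    proof (rule eventually_mono)
      fix t assume "t \<in> {t0<..<t0 + \<rho>}"
      hence h: "\<bar>t - t0\<bar> < \<rho>" "\<not> \<sigma> * (t - t0) < 0" using True by auto
      show "(\<eta>' \<circ> circ) t = b * cis (pi * (t - x))" using eta'_form[OF near_t0(1)[OF h(1)]] near_t0(2)[OF h(1)] h(2) by simp
    qed
    thus ?thesis using True by simp
  next
    case False
    hence sm: "\<sigma> = -1" using sig by simp
    have "eventually (\<lambda>t. t \<in> {t0 - \<rho><..<t0}) (at_left t0)"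
      using rho_pos by (intro eventually_at_left_real) simp
    hence "eventually (\<lambda>t. (\<eta>' \<circ> circ) t = b * cis (pi * (t - x))) (at_left t0)"
    proof (rule eventually_mono)
      fix t assume "t \<in> {t0 - \<rho><..<t0}"
      hence h: "\<bar>t - t0\<bar> < \<rho>" "\<not> \<sigma> * (t - t0) < 0" using sm by auto
      show "(\<eta>' \<circ> circ) t = b * cis (pi * (t - x))" using eta'_form[OF near_t0(1)[OF h(1)]] near_t0(2)[OF h(1)] h(2) by simp
    qed
    thus ?thesis using False by simp
  qed
  have "((\<lambda>t. b * cis (pi * (t - x))) \<longlongrightarrow> b * cis (pi * (t0 - x))) (if \<sigma> = 1 then at_right t0 else at_left t0)"
    using isCont_cisf[where c=b and x=x and tt=t0] unfolding isCont_def
    by (rule tendsto_mono[rotated]) (simp add: at_left_le at_right_le)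
  thus ?thesis by (rule iffD2[OF tendsto_cong[OF ev]])
qed

lemma PQ_ne: "a * cis (pi * (t0 - x)) \<noteq> b * cis (pi * (t0 - x))"
  using ab by simp

lemma d'_t0: "circ t0 = d'" by (simp add: t0_def d'_def)

lemma jump_d': "jump_at \<eta>' d'"
  unfolding jump_at_def
proof (cases "\<sigma> = 1")
  case True
  show "\<exists>x l r. circ x = d' \<and> ((\<eta>' \<circ> circ) \<longlongrightarrow> l) (at_left x) \<and> ((\<eta>' \<circ> circ) \<longlongrightarrow> r) (at_right x) \<and>
      l \<noteq> r \<and> (\<eta>' d' = l \<or> \<eta>' d' = r)"
    using lim_P_side lim_Q_side True PQ_ne d'_t0 eta'_d' by (intro exI[of _ t0]) auto
next
  case False
  show "\<exists>x l r. circ x = d' \<and> ((\<eta>' \<circ> circ) \<longlongrightarrow> l) (at_left x) \<and> ((\<eta>' \<circ> circ) \<longlongrightarrow> r) (at_right x) \<and>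
      l \<noteq> r \<and> (\<eta>' d' = l \<or> \<eta>' d' = r)"
    using lim_P_side lim_Q_side False PQ_ne[symmetric] d'_t0 eta'_d'
    by (intro exI[of _ t0] exI[of _ "b * cis (pi * (t0 - x))"] exI[of _ "a * cis (pi * (t0 - x))"]) auto
qed

lemma d'_discont': "d' \<in> discont \<eta>'"
proof -
  have "\<not> continuous (at d' within circleT) \<eta>'"
  proof
    assume "continuous (at d' within circleT) \<eta>'"
    hence "isCont (\<eta>' \<circ> circ) t0" using cont_to_circ d'_t0 by metis
    hence c: "((\<eta>' \<circ> circ) \<longlongrightarrow> b * cis (pi * (t0 - x))) (at t0)"
      unfolding isCont_def using eta'_d' d'_t0 by simp
    have "((\<eta>' \<circ> circ) \<longlongrightarrow> b * cis (pi * (t0 - x))) (if \<sigma> = 1 then at_left t0 else at_right t0)"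
      using c by (rule tendsto_mono[rotated]) (simp add: at_left_le at_right_le)
    moreover have "(if \<sigma> = 1 then at_left t0 else at_right t0) \<noteq> bot" by simp
    ultimately show False using lim_P_side PQ_ne tendsto_unique by blast
  qed
  thus ?thesis unfolding discont_def d'_def by simp
qed

end

context surg begin

lemma discont_eq: "discont \<eta>' = insert d' (discont \<eta> - {d})"
proof (intro equalityI subsetI)
  fix z assume z: "z \<in> discont \<eta>'"
  hence zT: "z \<in> circleT" and nc: "\<not> continuous (at z within circleT) \<eta>'" by (auto simp: discont_def)
  show "z \<in> insert d' (discont \<eta> - {d})"
  proof (cases "z \<in> K")
    case True
    thus ?thesis using K_cont' nc by blast
  next
    case False
    hence "\<not> continuous (at z within circleT) \<eta>" using off_K_iff[OF zT False] nc by simp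
    moreover have "z \<noteq> d" using False d_in_K by auto
    ultimately show ?thesis using zT by (auto simp: discont_def)
  qed
next
  fix z assume z: "z \<in> insert d' (discont \<eta> - {d})"
  show "z \<in> discont \<eta>'"
  proof (cases "z = d'")
    case True thus ?thesis using d'_discont' by simp
  next
    case False
    hence zd: "z \<in> discont \<eta>" "z \<noteq> d" using z by auto
    hence zK: "z \<notin> K" using K_not_discont by blast
    have zT: "z \<in> circleT" using zd by (simp add: discont_def)
    show ?thesis using zd off_K_iff[OF zT zK] by (simp add: discont_def)
  qed
qed

lemma jumps: "z \<in> discont \<eta>' \<Longrightarrow> jump_at \<eta>' z"
proof -
  assume z: "z \<in> discont \<eta>'"
  show "jump_at \<eta>' z"
  proof (cases "z = d'")
    case True thus ?thesis using jump_d' by simp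
  next
    case False
    hence zd: "z \<in> discont \<eta>" "z \<noteq> d" using z discont_eq by auto
    hence zK: "z \<notin> K" using K_not_discont by blast
    have "jump_at \<eta> z" using sel zd unfolding preimage_selector_def by blast
    then obtain xz l r where j: "circ xz = z" "((\<eta> \<circ> circ) \<longlongrightarrow> l) (at_left xz)"
      "((\<eta> \<circ> circ) \<longlongrightarrow> r) (at_right xz)" "l \<noteq> r" "\<eta> z = l \<or> \<eta> z = r"
      unfolding jump_at_def by blast
    have "eventually (\<lambda>t. circ t \<in> - K) (at xz)"
      using cont_circ[of xz] closed_K zK j(1) unfolding isCont_def
      by (intro topological_tendstoD) auto
    hence ev: "eventually (\<lambda>t. (\<eta>' \<circ> circ) t = (\<eta> \<circ> circ) t) (at xz)"
      by (rule eventually_mono) (simp add: eta'_off)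
    have "((\<eta>' \<circ> circ) \<longlongrightarrow> l) (at_left xz)"
      using j(2) by (rule iffD2[OF tendsto_cong[OF filter_leD[OF at_left_le ev]]])
    moreover have "((\<eta>' \<circ> circ) \<longlongrightarrow> r) (at_right xz)"
      using j(3) by (rule iffD2[OF tendsto_cong[OF filter_leD[OF at_right_le ev]]])
    moreover have "\<eta>' z = \<eta> z" using eta'_off zK by simp
    ultimately show ?thesis unfolding jump_at_def using j by blast
  qed
qed

lemma sel': "preimage_selector \<eta>'"
proof -
  have "\<forall>z\<in>circleT. \<eta>' z \<in> circleT \<and> E2 (\<eta>' z) = z"
  proof
    fix z assume zT: "z \<in> circleT"
    have h: "\<eta> z \<in> circleT" "E2 (\<eta> z) = z" using sel zT by (auto simp: preimage_selector_def)
    show "\<eta>' z \<in> circleT \<and> E2 (\<eta>' z) = z"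
    proof (cases "z \<in> C")
      case True thus ?thesis using h by (simp add: \<eta>'_def E2_def inT_iff)
    next
      case False
      show ?thesis
      proof (cases "z = d")
        case True thus ?thesis using False na asq cx by (simp add: \<eta>'_def E2_def inT_iff)
      next
        case F2: False thus ?thesis using False h by (simp add: \<eta>'_def)
      qed
    qed
  qed
  moreover have "finite (discont \<eta>')"
    using sel discont_eq by (simp add: preimage_selector_def)
  ultimately show ?thesis using jumps by (simp add: preimage_selector_def)
qed

definition "R = (\<lambda>u. b * cis (pi * (\<sigma> * u))) ` {0..s}"

lemma closed_R: "closed R"
proof -
  have "compact R" unfolding R_def cis_conv_exp
    by (intro compact_continuous_image) (auto intro!: continuous_intros)
  thus ?thesis by (rule compact_imp_closed)
qed

lemma diff_sub_R: "z \<in> circleT \<Longrightarrow> \<eta>' z \<noteq> \<eta> z \<Longrightarrow> \<eta> z \<in> R"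
proof -
  assume zT: "z \<in> circleT" and ne: "\<eta>' z \<noteq> \<eta> z"
  show "\<eta> z \<in> R"
  proof (cases "z \<in> C")
    case True
    then obtain t where t: "z = circ t" "\<bar>t - x\<bar> < \<delta>" "0 < \<sigma> * (t - x)" "\<sigma> * (t - x) < s"
      unfolding C_def by blast
    have "\<eta> z = b * cis (pi * (\<sigma> * (\<sigma> * (t - x))))" using loc(1)[OF t(2,3)] t(1) by simp
    thus ?thesis unfolding R_def using t by (intro image_eqI[of _ _ "\<sigma> * (t - x)"]) auto
  next
    case False
    hence zd: "z = d" using ne unfolding \<eta>'_def by (cases "z = d") auto
    hence "\<eta> z \<noteq> a" using ne False unfolding \<eta>'_def by auto
    hence "\<eta> z = b" using etad zd by auto
    thus ?thesis unfolding R_def using spos by (intro image_eqI[of _ _ 0]) auto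
  qed
qed

lemma closure_sub:
  assumes "S \<subseteq> closure (\<eta> ` circleT)" "S \<inter> R = {}"
  shows "S \<subseteq> closure (\<eta>' ` circleT)"
proof -
  define D where "D = {z \<in> circleT. \<eta>' z \<noteq> \<eta> z}"
  have "\<eta> ` circleT \<subseteq> \<eta>' ` (circleT - D) \<union> R"
  proof
    fix w assume "w \<in> \<eta> ` circleT"
    then obtain z where z: "z \<in> circleT" "w = \<eta> z" by blast
    show "w \<in> \<eta>' ` (circleT - D) \<union> R"
    proof (cases "\<eta>' z = \<eta> z")
      case True
      hence "z \<in> circleT - D" using z by (simp add: D_def)
      thus ?thesis using True z by (metis UnI1 image_eqI)
    next
      case False thus ?thesis using diff_sub_R z by auto
    qed
  qed
  hence "closure (\<eta> ` circleT) \<subseteq> closure (\<eta>' ` (circleT - D) \<union> R)" by (rule closure_mono)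
  also have "\<dots> = closure (\<eta>' ` (circleT - D)) \<union> R" using closed_R by (simp add: closure_Un)
  also have "\<dots> \<subseteq> closure (\<eta>' ` circleT) \<union> R" by (intro Un_mono closure_mono image_mono) auto
  finally show ?thesis using assms by blast
qed

end

lemma choose_avoid:
  assumes cA: "countable A" and m: "0 < m" "m \<le> 1/2" and sig: "\<sigma> = 1 \<or> \<sigma> = -1"
  shows "\<exists>s. 0 < s \<and> s < m \<and> circ (x + \<sigma> * s) \<notin> A"
proof (rule ccontr)
  assume "\<not> ?thesis"
  hence all: "\<And>u. u \<in> {0<..<m} \<Longrightarrow> circ (x + \<sigma> * u) \<in> A" by auto
  have inj: "inj_on (\<lambda>u. circ (x + \<sigma> * u)) {0<..<m}"
  proof (rule inj_onI)
    fix u v assume uv: "u \<in> {0<..<m}" "v \<in> {0<..<m}" "circ (x + \<sigma> * u) = circ (x + \<sigma> * v)"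
    have "\<bar>(x + \<sigma> * u) - (x + \<sigma> * v)\<bar> = \<bar>u - v\<bar>"
      using sig by (auto simp: abs_minus_commute)
    also have "\<dots> < 1" using uv m by auto
    finally have "x + \<sigma> * u = x + \<sigma> * v" using circ_inj[OF uv(3)] by blast
    thus "u = v" using sig by auto
  qed
  have "(\<lambda>u. circ (x + \<sigma> * u)) ` {0<..<m} \<subseteq> A" using all by auto
  hence "countable ((\<lambda>u. circ (x + \<sigma> * u)) ` {0<..<m})" using cA countable_subset by blast
  hence "countable {0<..<m}" using countable_image_inj_on inj by blast
  thus False using uncountable_open_interval[of 0 m] m by simp
qed

lemma surgery_exists:
  assumes sel: "preimage_selector \<eta>" and dD: "d \<in> discont \<eta>" and cx: "circ x = d"
    and sig: "\<sigma> = 1 \<or> \<sigma> = -1"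
    and limA: "((\<eta> \<circ> circ) \<longlongrightarrow> a) (if \<sigma> = 1 then at_left x else at_right x)"
    and limB: "((\<eta> \<circ> circ) \<longlongrightarrow> b) (if \<sigma> = 1 then at_right x else at_left x)"
    and ab: "a \<noteq> b" and etad: "\<eta> d = a \<or> \<eta> d = b"
    and S: "S \<subseteq> closure (\<eta> ` circleT)"
    and eps: "\<epsilon> > 0" and free: "\<And>u. 0 \<le> u \<Longrightarrow> u \<le> \<epsilon> \<Longrightarrow> b * cis (pi * (\<sigma> * u)) \<notin> S"
    and cA: "countable A"
  shows "\<exists>\<eta>' d'. preimage_selector \<eta>' \<and> discont \<eta>' = insert d' (discont \<eta> - {d}) \<and>
      d' \<notin> discont \<eta> \<and> d' \<notin> A \<and> S \<subseteq> closure (\<eta>' ` circleT)"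
proof -
  define FA where "FA = (if \<sigma> = 1 then at_left x else at_right x)"
  define FB where "FB = (if \<sigma> = 1 then at_right x else at_left x)"
  have FAle: "FA \<le> at x" and FBle: "FB \<le> at x" unfolding FA_def FB_def
    by (simp_all add: at_left_le at_right_le)
  have FAnb: "FA \<noteq> bot" and FBnb: "FB \<noteq> bot" unfolding FA_def FB_def by simp_all
  have asq: "a ^ 2 = circ x" using lim_sq[OF sel limA[folded FA_def] FAnb FAle] .
  have bsq: "b ^ 2 = circ x" using lim_sq[OF sel limB[folded FB_def] FBnb FBle] .
  have bma: "b = - a" using sqrt_cases[of b a] asq bsq ab by auto
  have evA: "eventually (\<lambda>t. \<eta> (circ t) = a * cis (pi * (t - x))) FA"
    using local_form[OF sel limA[folded FA_def] asq FAle] .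
  have evB: "eventually (\<lambda>t. \<eta> (circ t) = b * cis (pi * (t - x))) FB"
    using local_form[OF sel limB[folded FB_def] bsq FBle] .
  have "\<exists>\<delta>0>0. (\<forall>u. 0 < u \<and> u < \<delta>0 \<longrightarrow> \<eta> (circ (x + \<sigma> * u)) = b * cis (pi * (\<sigma> * u))) \<and>
                (\<forall>u. 0 < u \<and> u < \<delta>0 \<longrightarrow> \<eta> (circ (x - \<sigma> * u)) = a * cis (- (pi * (\<sigma> * u))))"
  proof (cases "\<sigma> = 1")
    case True
    obtain d1 where d1: "d1 > 0" "\<forall>u. 0 < u \<and> u < d1 \<longrightarrow> \<eta> (circ (x + u)) = b * cis (pi * ((x + u) - x))"
      using ev_right[of "\<lambda>t. \<eta> (circ t) = b * cis (pi * (t - x))" x] evB True unfolding FB_def by auto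
    obtain d2 where d2: "d2 > 0" "\<forall>u. 0 < u \<and> u < d2 \<longrightarrow> \<eta> (circ (x - u)) = a * cis (pi * ((x - u) - x))"
      using ev_left[of "\<lambda>t. \<eta> (circ t) = a * cis (pi * (t - x))" x] evA True unfolding FA_def by auto
    show ?thesis using d1 d2 True by (intro exI[of _ "min d1 d2"]) auto
  next
    case False
    hence sm: "\<sigma> = -1" using sig by auto
    obtain d1 where d1: "d1 > 0" "\<forall>u. 0 < u \<and> u < d1 \<longrightarrow> \<eta> (circ (x - u)) = b * cis (pi * ((x - u) - x))"
      using ev_left[of "\<lambda>t. \<eta> (circ t) = b * cis (pi * (t - x))" x] evB False unfolding FB_def by auto
    obtain d2 where d2: "d2 > 0" "\<forall>u. 0 < u \<and> u < d2 \<longrightarrow> \<eta> (circ (x + u)) = a * cis (pi * ((x + u) - x))"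
      using ev_right[of "\<lambda>t. \<eta> (circ t) = a * cis (pi * (t - x))" x] evA False unfolding FA_def by auto
    show ?thesis using d1 d2 sm by (intro exI[of _ "min d1 d2"]) auto
  qed
  then obtain \<delta>0 where d0: "\<delta>0 > 0"
    "\<And>u. 0 < u \<Longrightarrow> u < \<delta>0 \<Longrightarrow> \<eta> (circ (x + \<sigma> * u)) = b * cis (pi * (\<sigma> * u))"
    "\<And>u. 0 < u \<Longrightarrow> u < \<delta>0 \<Longrightarrow> \<eta> (circ (x - \<sigma> * u)) = a * cis (- (pi * (\<sigma> * u)))"
    by blast
  define \<delta> where "\<delta> = min \<delta>0 (1/2)"
  have dpos: "\<delta> > 0" and dle: "\<delta> \<le> 1/2" using d0(1) by (auto simp: \<delta>_def)
  define m where "m = min (\<delta> / 2) \<epsilon>"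
  have m: "0 < m" "m \<le> 1/2" using dpos dle eps by (auto simp: m_def)
  obtain s where s: "0 < s" "s < m" "circ (x + \<sigma> * s) \<notin> A"
    using choose_avoid[OF cA m sig] by blast
  have sle: "s < \<delta>" using s m_def dpos by auto
  interpret surg \<eta> d x \<sigma> a b \<delta> s
  proof
    show "\<And>u. 0 < u \<Longrightarrow> u < \<delta> \<Longrightarrow> \<eta> (circ (x + \<sigma> * u)) = b * cis (pi * (\<sigma> * u))"
      using d0(2) \<delta>_def by auto
    show "\<And>u. 0 < u \<Longrightarrow> u < \<delta> \<Longrightarrow> \<eta> (circ (x - \<sigma> * u)) = a * cis (- (pi * (\<sigma> * u)))"
      using d0(3) \<delta>_def by auto
  qed (use sel dD cx sig asq bma dpos dle etad s sle in auto)
  have "S \<inter> R = {}"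
  proof -
    have "\<And>u. u \<in> {0..s} \<Longrightarrow> b * cis (pi * (\<sigma> * u)) \<notin> S"
      using free s m_def by auto
    thus ?thesis unfolding R_def by auto
  qed
  hence "S \<subseteq> closure (\<eta>' ` circleT)" using closure_sub S by blast
  moreover have "d' \<notin> A" using s by (simp add: d'_def)
  ultimately show ?thesis using sel' discont_eq d'_not_discont by blast
qed

locale meas = prob_space M for M :: "complex measure" +
  assumes sM: "sets M = sets (restrict_space borel circleT)"
    and inv: "E2_invariant M"
begin

lemma spaceM: "space M = circleT"
  using sets_eq_imp_space_eq[OF sM] by (simp add: space_restrict_space)

lemma T_borel: "circleT \<in> sets borel" using closed_T by simp

lemma sets_iff: "A \<in> sets M \<longleftrightarrow> A \<subseteq> circleT \<and> A \<in> sets borel"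
  using sM sets_restrict_space_iff[of circleT borel A] T_borel by simp

lemma single_sets: "z \<in> circleT \<Longrightarrow> {z} \<in> sets M"
  using sets_iff by auto

lemma openin_sets: "openin (top_of_set circleT) U \<Longrightarrow> U \<in> sets M"
proof -
  assume "openin (top_of_set circleT) U"
  then obtain O' where "open O'" "U = circleT \<inter> O'" by (auto simp: openin_open)
  thus ?thesis using sets_iff T_borel by auto
qed

lemma pow_cont: "continuous_on UNIV (\<lambda>z::complex. z ^ n)"
  by (intro continuous_intros)

lemma pow_pre_sets:
  assumes "A \<in> sets M" shows "(\<lambda>z. z ^ n) -` A \<inter> circleT \<in> sets M"
proof -
  have "(\<lambda>z::complex. z ^ n) \<in> borel_measurable borel"
    by (rule borel_measurable_continuous_onI[OF pow_cont])
  hence "(\<lambda>z::complex. z ^ n) -` A \<inter> space borel \<in> sets borel"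
    using assms sets_iff by (intro measurable_sets) auto
  thus ?thesis using sets_iff T_borel by auto
qed

lemma pow_T: "z \<in> circleT \<Longrightarrow> z ^ n \<in> circleT"
  by (simp add: inT_iff norm_power)

lemma inv_pow:
  assumes "A \<in> sets M"
  shows "emeasure M ((\<lambda>z. z ^ (2 ^ k)) -` A \<inter> circleT) = emeasure M A"
  using assms
proof (induction k arbitrary: A)
  case 0
  hence "A \<subseteq> circleT" using sets_iff by auto
  hence "(\<lambda>z. z ^ (2 ^ 0)) -` A \<inter> circleT = A" by auto
  thus ?case by simp
next
  case (Suc k)
  define B where "B = (\<lambda>z. z ^ (2 ^ k)) -` A \<inter> circleT"
  have B: "B \<in> sets M" using pow_pre_sets[OF Suc.prems] by (simp add: B_def)
  have "(\<lambda>z. z ^ (2 ^ Suc k)) -` A \<inter> circleT = E2 -` B \<inter> circleT"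
  proof -
    have "\<And>z::complex. z ^ (2 ^ Suc k) = (z ^ 2) ^ (2 ^ k)"
      by (simp add: power_mult[symmetric] mult.commute)
    thus ?thesis unfolding B_def E2_def using pow_T by auto
  qed
  also have "emeasure M \<dots> = emeasure M B"
    using inv B spaceM by (simp add: E2_invariant_def)
  also have "\<dots> = emeasure M A" using Suc.IH[OF Suc.prems] by (simp add: B_def)
  finally show ?case .
qed

lemma minv_pow:
  assumes "A \<in> sets M"
  shows "measure M ((\<lambda>z. z ^ (2 ^ k)) -` A \<inter> circleT) = measure M A"
  using inv_pow[OF assms] by (simp add: measure_def)

lemma atom_iff: "atom M z \<longleftrightarrow> z \<in> circleT \<and> measure M {z} > 0"
  unfolding atom_def spaceM using emeasure_eq_measure[of "{z}"] by auto

lemma atoms_countable: "countable {z. atom M z}"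
proof -
  have "{z. atom M z} \<subseteq> {x. measure M {x} \<noteq> 0}" using atom_iff by auto
  thus ?thesis using countable_support countable_subset by blast
qed

lemma mono_pow:
  assumes "z \<in> circleT" shows "measure M {z} \<le> measure M {z ^ (2 ^ k)}"
proof -
  have "{z} \<subseteq> (\<lambda>w. w ^ (2 ^ k)) -` {z ^ (2 ^ k)} \<inter> circleT" using assms by auto
  hence "measure M {z} \<le> measure M ((\<lambda>w. w ^ (2 ^ k)) -` {z ^ (2 ^ k)} \<inter> circleT)"
    using pow_pre_sets[OF single_sets[OF pow_T[OF assms]]] by (rule finite_measure_mono)
  also have "\<dots> = measure M {z ^ (2 ^ k)}" by (rule minv_pow[OF single_sets[OF pow_T[OF assms]]])
  finally show ?thesis .
qed

lemma atom_pow: "atom M z \<Longrightarrow> atom M (z ^ (2 ^ k))"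
proof -
  assume "atom M z"
  hence z: "z \<in> circleT" "measure M {z} > 0" using atom_iff by auto
  have "measure M {z ^ (2 ^ k)} > 0" using mono_pow[OF z(1), of k] z(2) by linarith
  thus ?thesis using atom_iff pow_T[OF z(1)] by simp
qed

lemma atom_supp: "atom M z \<Longrightarrow> z \<in> measure_support M"
proof -
  assume a: "atom M z"
  hence zT: "z \<in> circleT" and pos: "emeasure M {z} > 0" using atom_def spaceM by auto
  show ?thesis unfolding measure_support_def
  proof (intro CollectI conjI allI impI zT)
    fix U assume U: "openin (top_of_set circleT) U \<and> z \<in> U"
    hence "emeasure M {z} \<le> emeasure M U" using openin_sets by (intro emeasure_mono) auto
    thus "emeasure M U > 0" using pos by simp
  qed
qed

lemma null_outside_supp:
  "circleT - measure_support M \<in> sets M \<and> emeasure M (circleT - measure_support M) = 0"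
proof -
  define F where "F = {U. openin (top_of_set circleT) U \<and> emeasure M U = 0}"
  have eq: "circleT - measure_support M = \<Union>F"
  proof (intro equalityI subsetI)
    fix w assume "w \<in> circleT - measure_support M"
    then obtain U where "openin (top_of_set circleT) U" "w \<in> U" "\<not> emeasure M U > 0"
      unfolding measure_support_def by auto
    thus "w \<in> \<Union>F" unfolding F_def by (auto simp: not_gr_zero)
  next
    fix w assume "w \<in> \<Union>F"
    then obtain U where U: "openin (top_of_set circleT) U" "emeasure M U = 0" "w \<in> U"
      unfolding F_def by auto
    hence "w \<in> circleT" using openin_subset[OF U(1)] by auto
    moreover have "w \<notin> measure_support M" using U unfolding measure_support_def by auto
    ultimately show "w \<in> circleT - measure_support M" by simp
  qed
  have "\<And>S. S \<in> F \<Longrightarrow> openin (top_of_set circleT) S" unfolding F_def by simp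
  then obtain F' where F': "F' \<subseteq> F" "countable F'" "\<Union>F' = \<Union>F"
    using Lindelof_openin[of F circleT] by metis
  have "(\<Union>U\<in>F'. U) \<in> null_sets M"
  proof (rule null_sets_UN'[OF F'(2)])
    fix U assume "U \<in> F'"
    hence "openin (top_of_set circleT) U" "emeasure M U = 0" using F' F_def by auto
    thus "U \<in> null_sets M" using openin_sets by (simp add: null_sets_def)
  qed
  hence "\<Union>F \<in> null_sets M" using F'(3) by simp
  thus ?thesis using eq by (simp add: null_sets_def)
qed

end

lemma pow2_comp: "((z::complex) ^ (2 ^ a)) ^ (2 ^ b) = z ^ (2 ^ (a + b))"
  by (simp add: power_mult[symmetric] power_add)

context meas begin

lemma finite_heavy:
  assumes m: "m > 0" shows "finite {y \<in> circleT. measure M {y} \<ge> m}"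
proof (rule ccontr)
  define H where "H = {y \<in> circleT. measure M {y} \<ge> m}"
  assume "\<not> finite {y \<in> circleT. measure M {y} \<ge> m}"
  hence "infinite H" by (simp add: H_def)
  then obtain B where B: "finite B" "card B = nat \<lceil>1 / m\<rceil> + 1" "B \<subseteq> H"
    using infinite_arbitrarily_large by blast
  have BT: "\<And>y. y \<in> B \<Longrightarrow> {y} \<in> sets M" using B(3) single_sets by (auto simp: H_def)
  have "measure M B = (\<Sum>y\<in>B. measure M {y})" by (rule finite_measure_eq_sum_singleton[OF B(1) BT])
  also have "\<dots> \<ge> of_nat (card B) * m" using B(3) by (intro sum_bounded_below) (auto simp: H_def)
  finally have "of_nat (card B) * m \<le> 1" using prob_le_1[of B] by linarith
  moreover have "of_nat (card B) \<ge> 1 / m + 1" using B(2) by simp linarith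
  hence "of_nat (card B) * m \<ge> (1 / m + 1) * m" using m by (intro mult_right_mono) auto
  hence "of_nat (card B) * m \<ge> 1 + m" using m by (simp add: distrib_right)
  ultimately show False using m by linarith
qed

lemma periodic:
  assumes a: "atom M z" shows "\<exists>k\<ge>1. z ^ (2 ^ k) = z"
proof -
  define o' where "o' n = z ^ (2 ^ n)" for n
  have zT: "z \<in> circleT" and m: "measure M {z} > 0" using a atom_iff by auto
  have oT: "\<And>n. o' n \<in> circleT" using pow_T[OF zT] by (simp add: o'_def)
  have oat: "\<And>n. measure M {o' n} > 0" unfolding o'_def
    using less_le_trans[OF m mono_pow[OF zT]] by simp
  have osuc: "\<And>n. o' (Suc n) = (o' n) ^ 2"
    unfolding o'_def by (simp add: power_mult[symmetric] mult.commute)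
  have "range o' \<subseteq> {y \<in> circleT. measure M {y} \<ge> measure M {z}}"
    using mono_pow[OF zT] oT unfolding o'_def by auto
  hence "finite (range o')" using finite_heavy[OF m] finite_subset by blast
  hence "\<not> inj o'" using range_inj_infinite by auto
  then obtain i j where ij: "i \<noteq> j" "o' i = o' j" unfolding inj_def by auto
  define P where "P i \<longleftrightarrow> (\<exists>j>i. o' i = o' j)" for i
  have "P (min i j)" using ij unfolding P_def
    by (cases "i < j") (auto intro!: exI[of _ "max i j"] simp: min_def max_def)
  hence Pi0: "P (LEAST i. P i)" by (rule LeastI)
  define i0 where "i0 = (LEAST i. P i)"
  have minP: "\<And>i. i < i0 \<Longrightarrow> \<not> P i" unfolding i0_def using not_less_Least by blast
  obtain j0 where j0: "j0 > i0" "o' i0 = o' j0" using Pi0 unfolding P_def i0_def by blast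
  show ?thesis
  proof (cases i0)
    case 0
    thus ?thesis using j0 unfolding o'_def by (intro exI[of _ j0]) auto
  next
    case (Suc i')
    obtain j' where jj: "j0 = Suc j'" using j0 by (cases j0) auto
    have ij': "j' > i'" "j' \<ge> i0" using j0 jj Suc by auto
    have ne: "o' i' \<noteq> o' j'" using minP[of i'] ij' Suc unfolding P_def by auto
    have sq: "(o' j') ^ 2 = (o' i') ^ 2" using j0(2) osuc jj Suc by simp
    have "o' j' = - o' i'"
      using sqrt_cases[OF sq]
    proof (elim disjE)
      assume "o' j' = o' i'" with ne show ?thesis by simp
    qed
    define X where "X = (\<lambda>w. w ^ (2 ^ 1)) -` {o' i0} \<inter> circleT"
    have Xs: "X \<in> sets M" unfolding X_def by (rule pow_pre_sets[OF single_sets[OF oT]])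
    have "{o' i'} \<union> {o' j'} \<subseteq> X" unfolding X_def using oT osuc Suc sq by auto
    hence "measure M ({o' i'} \<union> {o' j'}) \<le> measure M X" using Xs by (rule finite_measure_mono)
    also have "\<dots> = measure M {o' i0}" unfolding X_def by (rule minv_pow[OF single_sets[OF oT]])
    finally have le1: "measure M ({o' i'} \<union> {o' j'}) \<le> measure M {o' i0}" .
    have disj: "{o' i'} \<inter> {o' j'} = {}" using ne by auto
    have "measure M ({o' i'} \<union> {o' j'}) = measure M {o' i'} + measure M {o' j'}"
      by (rule finite_measure_Union[OF single_sets[OF oT] single_sets[OF oT] disj])
    hence "measure M {o' i'} + measure M {o' j'} \<le> measure M {o' i0}" using le1 by simp
    moreover have "measure M {o' i0} \<le> measure M {o' j'}"
    proof -
      have "o' j' = (o' i0) ^ (2 ^ (j' - i0))" unfolding o'_def using pow2_comp ij' by simp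
      thus ?thesis using mono_pow[OF oT, of i0 "j' - i0"] by simp
    qed
    ultimately show ?thesis using oat[of i'] by linarith
  qed
qed

end

context surg begin
lemma cont_eta_neg:
  assumes "\<bar>tq - x\<bar> < \<delta>" "\<sigma> * (tq - x) < 0"
  shows "continuous (at (circ tq) within circleT) \<eta>"
proof (rule cont_from_formula[OF open_band[of "-1" 0]])
  show "tq \<in> {t. \<bar>t - x\<bar> < \<delta> \<and> - 1 < \<sigma> * (t - x) \<and> \<sigma> * (t - x) < 0}"
    using assms sabs_t[of tq] dle by auto
next
  fix t assume "t \<in> {t. \<bar>t - x\<bar> < \<delta> \<and> - 1 < \<sigma> * (t - x) \<and> \<sigma> * (t - x) < 0}"
  thus "\<eta> (circ t) = a * cis (pi * (t - x))" using loc(2) by auto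
qed
end

lemma local_both:
  assumes sel: "preimage_selector \<eta>"
    and sig: "\<sigma> = 1 \<or> \<sigma> = -1"
    and limA: "((\<eta> \<circ> circ) \<longlongrightarrow> a) (if \<sigma> = 1 then at_left x else at_right x)"
    and limB: "((\<eta> \<circ> circ) \<longlongrightarrow> b) (if \<sigma> = 1 then at_right x else at_left x)"
    and ab: "a \<noteq> b"
  shows "a ^ 2 = circ x \<and> b = - a \<and> (\<exists>\<delta>0>0. (\<forall>u. 0 < u \<and> u < \<delta>0 \<longrightarrow> \<eta> (circ (x + \<sigma> * u)) = b * cis (pi * (\<sigma> * u))) \<and>
                (\<forall>u. 0 < u \<and> u < \<delta>0 \<longrightarrow> \<eta> (circ (x - \<sigma> * u)) = a * cis (- (pi * (\<sigma> * u)))))"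
proof -
  define FA where "FA = (if \<sigma> = 1 then at_left x else at_right x)"
  define FB where "FB = (if \<sigma> = 1 then at_right x else at_left x)"
  have FAle: "FA \<le> at x" and FBle: "FB \<le> at x" unfolding FA_def FB_def
    by (simp_all add: at_left_le at_right_le)
  have FAnb: "FA \<noteq> bot" and FBnb: "FB \<noteq> bot" unfolding FA_def FB_def by simp_all
  have asq: "a ^ 2 = circ x" using lim_sq[OF sel limA[folded FA_def] FAnb FAle] .
  have bsq: "b ^ 2 = circ x" using lim_sq[OF sel limB[folded FB_def] FBnb FBle] .
  have bma: "b = - a" using sqrt_cases[of b a] asq bsq ab by auto
  have evA: "eventually (\<lambda>t. \<eta> (circ t) = a * cis (pi * (t - x))) FA"
    using local_form[OF sel limA[folded FA_def] asq FAle] .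
  have evB: "eventually (\<lambda>t. \<eta> (circ t) = b * cis (pi * (t - x))) FB"
    using local_form[OF sel limB[folded FB_def] bsq FBle] .
  have "\<exists>\<delta>0>0. (\<forall>u. 0 < u \<and> u < \<delta>0 \<longrightarrow> \<eta> (circ (x + \<sigma> * u)) = b * cis (pi * (\<sigma> * u))) \<and>
                (\<forall>u. 0 < u \<and> u < \<delta>0 \<longrightarrow> \<eta> (circ (x - \<sigma> * u)) = a * cis (- (pi * (\<sigma> * u))))"
  proof (cases "\<sigma> = 1")
    case True
    obtain d1 where d1: "d1 > 0" "\<forall>u. 0 < u \<and> u < d1 \<longrightarrow> \<eta> (circ (x + u)) = b * cis (pi * ((x + u) - x))"
      using ev_right[of "\<lambda>t. \<eta> (circ t) = b * cis (pi * (t - x))" x] evB True unfolding FB_def by auto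
    obtain d2 where d2: "d2 > 0" "\<forall>u. 0 < u \<and> u < d2 \<longrightarrow> \<eta> (circ (x - u)) = a * cis (pi * ((x - u) - x))"
      using ev_left[of "\<lambda>t. \<eta> (circ t) = a * cis (pi * (t - x))" x] evA True unfolding FA_def by auto
    show ?thesis using d1 d2 True by (intro exI[of _ "min d1 d2"]) auto
  next
    case False
    hence sm: "\<sigma> = -1" using sig by auto
    obtain d1 where d1: "d1 > 0" "\<forall>u. 0 < u \<and> u < d1 \<longrightarrow> \<eta> (circ (x - u)) = b * cis (pi * ((x - u) - x))"
      using ev_left[of "\<lambda>t. \<eta> (circ t) = b * cis (pi * (t - x))" x] evB False unfolding FB_def by auto
    obtain d2 where d2: "d2 > 0" "\<forall>u. 0 < u \<and> u < d2 \<longrightarrow> \<eta> (circ (x + u)) = a * cis (pi * ((x + u) - x))"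
      using ev_right[of "\<lambda>t. \<eta> (circ t) = a * cis (pi * (t - x))" x] evA False unfolding FA_def by auto
    show ?thesis using d1 d2 sm by (intro exI[of _ "min d1 d2"]) auto
  qed
  thus ?thesis using asq bma by blast
qed

lemma circ_sq: "circ t ^ 2 = circ (2 * t)"
  using circ_add[of t t] by (simp add: power2_eq_square)

lemma circ_is_cis: "circ t = cis (2 * pi * t)" by (simp add: circ_def)

lemma arg_small:
  assumes "th > 0"
  shows "\<exists>\<rho>>0. \<forall>z. dist z 1 < \<rho> \<longrightarrow> \<bar>Arg z\<bar> < th"
proof -
  have "isCont Arg 1" by (intro continuous_at_Arg) (auto simp: complex_nonpos_Reals_iff)
  thus ?thesis using assms unfolding continuous_at_eps_delta by (auto simp: dist_real_def)
qed

context meas begin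

lemma notsupp_CL:
  assumes sel: "preimage_selector \<eta>" and S: "measure_support M \<subseteq> closure (\<eta> ` circleT)"
    and cont: "continuous (at (E2 w) within circleT) \<eta>" and ne: "\<eta> (E2 w) \<noteq> w"
  shows "w \<notin> measure_support M"
  using CL[OF sel _ cont] ne S by blast

lemma free_side:
  assumes sel: "preimage_selector \<eta>" and S: "measure_support M \<subseteq> closure (\<eta> ` circleT)"
    and dD: "d \<in> discont \<eta>" and cx: "circ x = d"
    and sig: "\<sigma> = 1 \<or> \<sigma> = -1"
    and limA: "((\<eta> \<circ> circ) \<longlongrightarrow> a) (if \<sigma> = 1 then at_left x else at_right x)"
    and limB: "((\<eta> \<circ> circ) \<longlongrightarrow> b) (if \<sigma> = 1 then at_right x else at_left x)"
    and ab: "a \<noteq> b" and etad: "\<eta> d = a \<or> \<eta> d = b"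
    and aper: "a ^ (2 ^ k) = a" and k1: "k \<ge> 1"
  shows "\<exists>\<epsilon>>0. \<forall>u. 0 \<le> u \<and> u \<le> \<epsilon> \<longrightarrow> b * cis (pi * (\<sigma> * u)) \<notin> measure_support M"
proof -
  obtain asq bma \<delta>0 where lb: "a ^ 2 = circ x" "b = - a" "\<delta>0 > 0"
    "\<And>u. 0 < u \<Longrightarrow> u < \<delta>0 \<Longrightarrow> \<eta> (circ (x + \<sigma> * u)) = b * cis (pi * (\<sigma> * u))"
    "\<And>u. 0 < u \<Longrightarrow> u < \<delta>0 \<Longrightarrow> \<eta> (circ (x - \<sigma> * u)) = a * cis (- (pi * (\<sigma> * u)))"
    using local_both[OF sel sig limA limB ab] by blast
  define \<delta> where "\<delta> = min \<delta>0 (1/2)"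
  have dpos: "\<delta> > 0" and dle: "\<delta> \<le> 1/2" using lb(3) by (auto simp: \<delta>_def)
  interpret surg \<eta> d x \<sigma> a b \<delta> "\<delta>/2"
  proof
    show "\<And>u. 0 < u \<Longrightarrow> u < \<delta> \<Longrightarrow> \<eta> (circ (x + \<sigma> * u)) = b * cis (pi * (\<sigma> * u))"
      using lb(4) \<delta>_def by auto
    show "\<And>u. 0 < u \<Longrightarrow> u < \<delta> \<Longrightarrow> \<eta> (circ (x - \<sigma> * u)) = a * cis (- (pi * (\<sigma> * u)))"
      using lb(5) \<delta>_def by auto
  qed (use sel dD cx sig lb dpos dle etad in auto)
  define N where "N = circleT - measure_support M"
  have Ns: "N \<in> sets M" and N0: "emeasure M N = 0" using null_outside_supp by (auto simp: N_def)
  have aT: "a \<in> circleT" using na by (simp add: inT_iff)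
  have bT: "b \<in> circleT" using na lb(2) by (simp add: inT_iff)
  have i: "a * circ (\<sigma> * v) \<notin> measure_support M" if v: "0 < v" "v < \<delta> / 2" for v
  proof -
    define w where "w = a * circ (\<sigma> * v)"
    define t where "t = x + \<sigma> * (2 * v)"
    have E2w: "E2 w = circ t"
    proof -
      have "E2 w = a ^ 2 * circ (\<sigma> * v) ^ 2" by (simp add: E2_def w_def power_mult_distrib)
      also have "\<dots> = circ x * circ (\<sigma> * (2 * v))" using lb(1) circ_sq[of "\<sigma> * v"] by (simp add: mult_ac)
      also have "\<dots> = circ t" by (simp add: t_def circ_add)
      finally show ?thesis .
    qed
    have tw: "\<bar>t - x\<bar> < \<delta>" "\<sigma> * (t - x) > 0" using v sabs by (auto simp: t_def abs_mult)
    have "continuous (at (E2 w) within circleT) \<eta>" using cont_eta_pos[OF tw] E2w by simp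
    moreover have "\<eta> (E2 w) = - w"
    proof -
      have "\<eta> (E2 w) = b * cis (pi * (t - x))" using loc(1)[OF tw] E2w by simp
      also have "cis (pi * (t - x)) = circ (\<sigma> * v)" by (simp add: t_def circ_def mult_ac)
      finally show ?thesis using lb(2) by (simp add: w_def)
    qed
    moreover have "w \<noteq> 0" using aT by (auto simp: w_def inT_iff)
    ultimately show ?thesis using notsupp_CL[OF sel S] unfolding w_def by force
  qed
  have ii: "b * cis (- (pi * (\<sigma> * u))) \<notin> measure_support M" if u: "0 < u" "u < \<delta>" for u
  proof -
    define w where "w = b * cis (- (pi * (\<sigma> * u)))"
    define t where "t = x - \<sigma> * u"
    have E2w: "E2 w = circ t"
    proof -
      have "E2 w = b ^ 2 * cis (- (pi * (\<sigma> * u))) ^ 2" by (simp add: E2_def w_def power_mult_distrib)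
      also have "\<dots> = circ x * circ (- (\<sigma> * u))" using lb(1,2) by (simp add: cis_sq circ_def mult_ac)
      also have "\<dots> = circ t" by (simp add: t_def circ_add[symmetric])
      finally show ?thesis .
    qed
    have tw: "\<bar>t - x\<bar> < \<delta>" "\<sigma> * (t - x) < 0" using u sabs by (auto simp: t_def abs_mult)
    have "continuous (at (E2 w) within circleT) \<eta>" using cont_eta_neg[OF tw] E2w by simp
    moreover have "\<eta> (E2 w) = - w"
    proof -
      have "\<eta> (E2 w) = a * cis (pi * (t - x))" using loc(2)[OF tw] E2w by simp
      also have "pi * (t - x) = - (pi * (\<sigma> * u))" by (simp add: t_def)
      finally show ?thesis using lb(2) by (simp add: w_def)
    qed
    moreover have "w \<noteq> 0" using bT by (auto simp: w_def inT_iff)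
    ultimately show ?thesis using notsupp_CL[OF sel S] unfolding w_def by force
  qed
  have bpow: "b ^ (2 ^ k) = a"
  proof -
    obtain k' where "k = Suc k'" using k1 by (cases k) auto
    hence "even ((2::nat) ^ k)" by simp
    thus ?thesis using lb(2) aper by (simp add: power_minus_even)
  qed
  have iii: "emeasure M {b} = 0"
  proof -
    define X where "X = (\<lambda>w. w ^ (2 ^ k)) -` {a} \<inter> circleT"
    have Xs: "X \<in> sets M" unfolding X_def by (rule pow_pre_sets[OF single_sets[OF aT]])
    have "{a} \<union> {b} \<subseteq> X" unfolding X_def using aT bT aper bpow by auto
    hence le1: "measure M ({a} \<union> {b}) \<le> measure M X" using Xs by (rule finite_measure_mono)
    have "measure M X = measure M {a}" unfolding X_def by (rule minv_pow[OF single_sets[OF aT]])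
    moreover have "measure M ({a} \<union> {b}) = measure M {a} + measure M {b}"
      using ab by (intro finite_measure_Union[OF single_sets[OF aT] single_sets[OF bT]]) auto
    ultimately have "measure M {b} = 0" using le1 measure_nonneg[of M "{b}"] by linarith
    thus ?thesis using emeasure_eq_measure by simp
  qed
  obtain k' where kk: "k = Suc k'" using k1 by (cases k) auto
  define \<theta>0 where "\<theta>0 = \<delta> / 2 ^ k"
  have th0: "\<theta>0 > 0" "\<theta>0 \<le> \<delta> / 2" using dpos kk by (auto simp: \<theta>0_def field_simps)
  have iv: "(b * cis (pi * (\<sigma> * u))) ^ (2 ^ k) \<in> N" if u: "0 < u" "u < \<theta>0" for u
  proof -
    define v where "v = 2 ^ k' * u"
    have "(b * cis (pi * (\<sigma> * u))) ^ (2 ^ k) = a * cis (real (2 ^ k) * (pi * (\<sigma> * u)))"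
      using bpow by (simp add: power_mult_distrib Complex.DeMoivre)
    also have "real (2 ^ k) * (pi * (\<sigma> * u)) = 2 * pi * (\<sigma> * v)" by (simp add: kk v_def mult_ac)
    finally have eq: "(b * cis (pi * (\<sigma> * u))) ^ (2 ^ k) = a * circ (\<sigma> * v)" by (simp add: circ_def)
    have "0 < v" "v < \<delta> / 2" using u th0 by (auto simp: v_def \<theta>0_def kk field_simps)
    hence "a * circ (\<sigma> * v) \<notin> measure_support M" by (rule i)
    moreover have "a * circ (\<sigma> * v) \<in> circleT" using aT by (simp add: inT_iff norm_mult circ_def)
    ultimately show ?thesis using eq by (simp add: N_def)
  qed
  obtain \<rho> where rho: "\<rho> > 0" "\<And>z. dist z 1 < \<rho> \<Longrightarrow> \<bar>Arg z\<bar> < pi * \<theta>0"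
    using arg_small[of "pi * \<theta>0"] th0 by auto
  define V where "V = circleT \<inter> ball b \<rho>"
  define P where "P = (\<lambda>w. w ^ (2 ^ k)) -` N \<inter> circleT"
  have Ps: "P \<in> sets M" unfolding P_def by (rule pow_pre_sets[OF Ns])
  have Vsub: "V \<subseteq> N \<union> {b} \<union> P"
  proof
    fix w assume "w \<in> V"
    hence wT: "w \<in> circleT" and wb: "dist b w < \<rho>" by (auto simp: V_def)
    have bnz: "b \<noteq> 0" using bT by (auto simp: inT_iff)
    define z where "z = w / b"
    have nz: "norm z = 1" using wT bT by (simp add: z_def norm_divide inT_iff)
    have "dist z 1 = norm (w - b) / norm b" unfolding z_def dist_norm using bnz
      by (simp add: norm_divide[symmetric] diff_divide_distrib)
    also have "\<dots> = dist b w" using bT by (simp add: inT_iff dist_norm norm_minus_commute)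
    finally have "dist z 1 < \<rho>" using wb by simp
    hence sm: "\<bar>Arg z\<bar> < pi * \<theta>0" by (rule rho(2))
    have zz: "z \<noteq> 0" using nz by auto
    have "cis (Arg z) = z" using cis_Arg[OF zz] nz by (simp add: sgn_div_norm)
    hence wform: "w = b * cis (Arg z)" using bnz by (simp add: z_def)
    define u where "u = \<sigma> * Arg z / pi"
    have argu: "Arg z = pi * (\<sigma> * u)" by (simp add: u_def mult_ac)
    have uabs: "\<bar>u\<bar> < \<theta>0" using sm sabs by (simp add: u_def abs_mult abs_divide field_simps)
    show "w \<in> N \<union> {b} \<union> P"
    proof (cases "u > 0")
      case True
      hence "w ^ (2 ^ k) \<in> N" using iv[of u] uabs wform argu by simp
      thus ?thesis using wT by (simp add: P_def)
    next
      case False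
      show ?thesis
      proof (cases "u = 0")
        case True thus ?thesis using wform argu by simp
      next
        case F2: False
        hence "0 < - u" "- u < \<delta>" using False uabs th0 by auto
        hence "b * cis (- (pi * (\<sigma> * (- u)))) \<notin> measure_support M" by (rule ii)
        hence "w \<notin> measure_support M" using wform argu by simp
        thus ?thesis using wT by (simp add: N_def)
      qed
    qed
  qed
  have Vopen: "openin (top_of_set circleT) V" unfolding V_def by (auto intro!: openin_open_Int)
  have bs: "{b} \<in> sets M" by (rule single_sets[OF bT])
  have U: "N \<union> {b} \<union> P \<in> sets M" using Ns bs Ps by (intro sets.Un)
  have "emeasure M V \<le> emeasure M (N \<union> {b} \<union> P)"
    by (rule emeasure_mono[OF Vsub U])
  also have "\<dots> \<le> emeasure M (N \<union> {b}) + emeasure M P"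
    using Ns bs Ps by (intro emeasure_subadditive sets.Un)
  also have "\<dots> \<le> emeasure M N + emeasure M {b} + emeasure M P"
    using emeasure_subadditive[OF Ns bs] by (simp add: add_right_mono)
  also have "emeasure M P = emeasure M N" unfolding P_def by (rule inv_pow[OF Ns])
  finally have V0: "emeasure M V = 0" using N0 iii by simp
  have Vfree: "w \<notin> measure_support M" if "w \<in> V" for w
    using that Vopen V0 unfolding measure_support_def by auto
  have "isCont (\<lambda>u. b * cis (pi * (\<sigma> * u))) 0" unfolding cis_conv_exp by (intro continuous_intros)
  then obtain e where e: "e > 0" "\<And>u. dist u 0 < e \<Longrightarrow> dist (b * cis (pi * (\<sigma> * u))) b < \<rho>"
    using rho(1) unfolding continuous_at_eps_delta by force
  show ?thesis
  proof (intro exI[of _ "e / 2"] conjI allI impI)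
    show "e / 2 > 0" using e by simp
    fix u assume "0 \<le> u \<and> u \<le> e / 2"
    hence "dist (b * cis (pi * (\<sigma> * u))) b < \<rho>" using e by (intro e(2)) (simp add: dist_real_def)
    moreover have "b * cis (pi * (\<sigma> * u)) \<in> circleT" using bT by (simp add: inT_iff norm_mult)
    ultimately have "b * cis (pi * (\<sigma> * u)) \<in> V" by (simp add: V_def dist_commute)
    thus "b * cis (pi * (\<sigma> * u)) \<notin> measure_support M" by (rule Vfree)
  qed
qed

end

context meas begin

lemma step:
  assumes sel: "preimage_selector \<eta>" and S: "measure_support M \<subseteq> closure (\<eta> ` circleT)"
    and dD: "d \<in> discont \<eta>" and dat: "atom M d"
  shows "\<exists>\<eta>'. preimage_selector \<eta>' \<and> discont \<eta>' \<inter> {z. atom M z} = (discont \<eta> \<inter> {z. atom M z}) - {d}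
      \<and> card (discont \<eta>') = card (discont \<eta>) \<and> measure_support M \<subseteq> closure (\<eta>' ` circleT)"
proof -
  obtain k where k: "k \<ge> 1" "d ^ (2 ^ k) = d" using periodic[OF dat] by blast
  obtain k' where kk: "k = Suc k'" using k(1) by (cases k) auto
  define a where "a = d ^ (2 ^ k')"
  have asq: "a ^ 2 = d"
  proof -
    have "a ^ 2 = d ^ (2 ^ k)" unfolding a_def kk by (simp add: power_mult[symmetric] mult.commute)
    thus ?thesis using k(2) by simp
  qed
  have aper: "a ^ (2 ^ k) = a"
  proof -
    have "a ^ (2 ^ k) = d ^ (2 ^ (k' + k))" unfolding a_def by (rule pow2_comp)
    also have "\<dots> = (d ^ (2 ^ k)) ^ (2 ^ k')" using pow2_comp[of d k k'] by (simp add: add.commute)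
    finally show ?thesis using k(2) a_def by simp
  qed
  have "jump_at \<eta> d" using sel dD by (simp add: preimage_selector_def)
  then obtain x l r where j: "circ x = d" "((\<eta> \<circ> circ) \<longlongrightarrow> l) (at_left x)"
      "((\<eta> \<circ> circ) \<longlongrightarrow> r) (at_right x)" "l \<noteq> r" "\<eta> d = l \<or> \<eta> d = r"
    unfolding jump_at_def by blast
  have lsq: "l ^ 2 = circ x" using lim_sq[OF sel j(2)] at_left_le by simp
  have rsq: "r ^ 2 = circ x" using lim_sq[OF sel j(3)] at_right_le by simp
  have rl: "r = - l" using sqrt_cases[of r l] lsq rsq j(4) by auto
  have "a = l \<or> a = - l" using sqrt_cases[of a l] asq lsq j(1) by simp
  hence "\<exists>(\<sigma>::real) b. (\<sigma> = 1 \<or> \<sigma> = -1) \<and> ((\<eta> \<circ> circ) \<longlongrightarrow> a) (if \<sigma> = 1 then at_left x else at_right x)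
      \<and> ((\<eta> \<circ> circ) \<longlongrightarrow> b) (if \<sigma> = 1 then at_right x else at_left x) \<and> a \<noteq> b \<and> (\<eta> d = a \<or> \<eta> d = b)"
  proof (elim disjE)
    assume "a = l"
    thus ?thesis using j by (intro exI[of _ "1::real"] exI[of _ r]) auto
  next
    assume "a = - l"
    thus ?thesis using j rl by (intro exI[of _ "-1::real"] exI[of _ l]) auto
  qed
  then obtain \<sigma> :: real and b where sb: "\<sigma> = 1 \<or> \<sigma> = -1" "((\<eta> \<circ> circ) \<longlongrightarrow> a) (if \<sigma> = 1 then at_left x else at_right x)"
      "((\<eta> \<circ> circ) \<longlongrightarrow> b) (if \<sigma> = 1 then at_right x else at_left x)" "a \<noteq> b" "\<eta> d = a \<or> \<eta> d = b"
    by blast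
  obtain \<epsilon> where eps: "\<epsilon> > 0" "\<And>u. 0 \<le> u \<Longrightarrow> u \<le> \<epsilon> \<Longrightarrow> b * cis (pi * (\<sigma> * u)) \<notin> measure_support M"
    using free_side[OF sel S dD j(1) sb aper k(1)] by blast
  obtain \<eta>' d' where e': "preimage_selector \<eta>'" "discont \<eta>' = insert d' (discont \<eta> - {d})"
      "d' \<notin> discont \<eta>" "d' \<notin> {z. atom M z}" "measure_support M \<subseteq> closure (\<eta>' ` circleT)"
    using surgery_exists[OF sel dD j(1) sb S eps atoms_countable] by blast
  have fin: "finite (discont \<eta>)" using sel by (simp add: preimage_selector_def)
  have cpos: "card (discont \<eta>) > 0" using fin dD card_gt_0_iff by blast
  have "card (discont \<eta>') = card (discont \<eta>)"
    using e'(2,3) fin dD cpos by (simp add: card_insert_disjoint card_Diff_singleton)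
  moreover have "discont \<eta>' \<inter> {z. atom M z} = (discont \<eta> \<inter> {z. atom M z}) - {d}"
    using e'(2,4) by auto
  ultimately show ?thesis using e' by blast
qed

lemma reduce:
  "\<forall>\<eta>. preimage_selector \<eta> \<longrightarrow> measure_support M \<subseteq> closure (\<eta> ` circleT) \<longrightarrow>
     card (discont \<eta> \<inter> {z. atom M z}) = n \<longrightarrow>
     (\<exists>\<eta>'. preimage_selector \<eta>' \<and> card (discont \<eta>') = card (discont \<eta>) \<and>
        measure_support M \<subseteq> closure (\<eta>' ` circleT) \<and> discont \<eta>' \<inter> {z. atom M z} = {})"
proof (induction n)
  case 0
  show ?case
  proof (intro allI impI)
    fix \<eta> assume h: "preimage_selector \<eta>" "measure_support M \<subseteq> closure (\<eta> ` circleT)"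
      "card (discont \<eta> \<inter> {z. atom M z}) = 0"
    have "finite (discont \<eta> \<inter> {z. atom M z})" using h(1) by (simp add: preimage_selector_def)
    hence "discont \<eta> \<inter> {z. atom M z} = {}" using h(3) by simp
    thus "\<exists>\<eta>'. preimage_selector \<eta>' \<and> card (discont \<eta>') = card (discont \<eta>) \<and>
        measure_support M \<subseteq> closure (\<eta>' ` circleT) \<and> discont \<eta>' \<inter> {z. atom M z} = {}"
      using h by blast
  qed
next
  case (Suc n)
  show ?case
  proof (intro allI impI)
    fix \<eta> assume h: "preimage_selector \<eta>" "measure_support M \<subseteq> closure (\<eta> ` circleT)"
      "card (discont \<eta> \<inter> {z. atom M z}) = Suc n"
    have fin: "finite (discont \<eta> \<inter> {z. atom M z})" using h(1) by (simp add: preimage_selector_def)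
    have "discont \<eta> \<inter> {z. atom M z} \<noteq> {}" using h(3) by auto
    then obtain d where d: "d \<in> discont \<eta>" "atom M d" by blast
    obtain \<eta>1 where e1: "preimage_selector \<eta>1"
      "discont \<eta>1 \<inter> {z. atom M z} = (discont \<eta> \<inter> {z. atom M z}) - {d}"
      "card (discont \<eta>1) = card (discont \<eta>)" "measure_support M \<subseteq> closure (\<eta>1 ` circleT)"
      using step[OF h(1,2) d] by blast
    have "card (discont \<eta>1 \<inter> {z. atom M z}) = n" using e1(2) h(3) fin d by simp
    then obtain \<eta>' where "preimage_selector \<eta>' \<and> card (discont \<eta>') = card (discont \<eta>1) \<and>
        measure_support M \<subseteq> closure (\<eta>' ` circleT) \<and> discont \<eta>' \<inter> {z. atom M z} = {}"
      using Suc.IH e1(1,4) by blast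
    thus "\<exists>\<eta>'. preimage_selector \<eta>' \<and> card (discont \<eta>') = card (discont \<eta>) \<and>
        measure_support M \<subseteq> closure (\<eta>' ` circleT) \<and> discont \<eta>' \<inter> {z. atom M z} = {}"
      using e1(3) by auto
  qed
qed

end

theorem lemma4:
  fixes M :: "complex measure" and p :: nat and F :: "complex set"
  assumes "prob_space M"
    and "sets M = sets (restrict_space borel circleT)"
    and "E2_invariant M"
    and "flower p F"
    and "measure_support M \<subseteq> F"
  shows "\<exists>F'. flower p F' \<and> measure_support M \<subseteq> F' \<and>
           (\<forall>x. atom M x \<longrightarrow> x \<in> (top_of_set circleT) interior_of F')"
proof -
  interpret meas M using assms(1-3) by (simp add: meas_def meas_axioms_def)
  obtain \<eta> where eta: "preimage_selector \<eta>" "card (discont \<eta>) = p" "F = closure (\<eta> ` circleT)"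
    using assms(4) unfolding flower_def by blast
  obtain \<eta>' where e': "preimage_selector \<eta>'" "card (discont \<eta>') = card (discont \<eta>)"
      "measure_support M \<subseteq> closure (\<eta>' ` circleT)" "discont \<eta>' \<inter> {z. atom M z} = {}"
    using reduce eta(1) assms(5) eta(3) by blast
  define F' where "F' = closure (\<eta>' ` circleT)"
  have "flower p F'" unfolding flower_def F'_def using e' eta(2) by blast
  moreover have "measure_support M \<subseteq> F'" using e'(3) by (simp add: F'_def)
  moreover have "\<forall>x. atom M x \<longrightarrow> x \<in> (top_of_set circleT) interior_of F'"
  proof (intro allI impI)
    fix y assume ay: "atom M y"
    have yF: "y \<in> closure (\<eta>' ` circleT)" using atom_supp[OF ay] e'(3) by blast
    have yT: "y \<in> circleT" using ay atom_iff by simp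
    have "atom M (y ^ (2 ^ 1))" by (rule atom_pow[OF ay])
    hence "E2 y \<notin> discont \<eta>'" using e'(4) by (auto simp: E2_def)
    hence "continuous (at (E2 y) within circleT) \<eta>'" using E2_in[OF yT] by (simp add: discont_def)
    thus "y \<in> (top_of_set circleT) interior_of F'"
      unfolding F'_def by (rule interior_lemma[OF e'(1) yF])
  qed
  ultimately show ?thesis by blast
qed

end
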